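(* Let $\mathbb{G} = (V,E,L,\Omega,v_I)$ be a parity formula over a finite set $\mathsf{Prop}$ of propositional variables such that (i) $\Omega$ is total, (ii) no vertex is labelled $\epsilon$, and (iii) $E[v]\neq\varnothing$ for every vertex $v$ labelled $\land$ or $\lor$. Let $\mathbb{A}_{\mathbb{G}} = (M_\Omega,\Theta,\mathrm{NBT}_\Omega,m_I)$ be the disjunctive modal automaton defined below. Then $\mathbb{G}\equiv\mathbb{A}_{\mathbb{G}}$.
   Context: Parity formulas. A parity formula over $\mathsf{Prop}$ is $\mathbb{G} = (V,E,L,\Omega,v_I)$ with $V$ finite, $E\subseteq V\times V$, $v_I\in V$, $\Omega$ a priority map into $\omega$ (partial in general, total here), and $L$ labelling each vertex by $\top,\bot,p,\overline{p}$ ($p\in\mathsf{Prop}$), $\land,\lor,\Diamond,\Box$ or $\epsilon$; literal/constant vertices have no successors, $\Diamond,\Box,\epsilon$ vertices have exactly one successor, and every cycle contains a vertex in $\mathrm{dom}(\Omega)$. $E[v]$ is the successor set; $V_\lor := L^{-1}(\lor)$, and similarly $V_\land, V_\Diamond, V_\Box$. Kripke model $\mathbb{S}=(S,R,\mathrm{Val})$, $\mathrm{Val}:S\to\wp\mathsf{Prop}$. Evaluation game $\mathcal{E}(\mathbb{G},\mathbb{S})$ on $V\times S$: at $(v,s)$, $\exists$ wins if $L(v)=\top$, or $L(v)=p\in\mathrm{Val}(s)$, or $L(v)=\overline{p}$ with $p\notin\mathrm{Val}(s)$, and loses at other literal/$\bot$ vertices; at $\lor$ (resp. $\land$) vertices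 $\exists$ (resp. $\forall$) moves to $(u,s)$, $u\in E[v]$; at $\Diamond$ (resp. $\Box$) vertices $\exists$ (resp. $\forall$) moves to $(u,t)$ with $u$ the successor of $v$ and $t\in R[s]$; a stuck player loses; an infinite match is won by $\exists$ iff the largest priority occurring infinitely often is even. Disjunctive modal automata $\mathbb{A}=(A,\Theta,\mathit{Acc},a_I)$: finite $A$, $a_I\in A$, $\mathit{Acc}\subseteq A^\omega$, $\Theta(a,c)$ a finite disjunction of formulas $\nabla B$, $B\subseteq A$, for $a\in A$, $c\in\wp\mathsf{Prop}$. A one-step model $(X,U)$, $U:A\to\wp X$, satisfies $\nabla B$ iff every $b\in B$ has some $x\in X$ with $x\in U(b)$ and every $x\in X$ lies in $U(b)$ for some $b\in B$. Acceptance game $\mathcal{A}(\mathbb{A},\mathbb{S})$: at $(a,s)$, $\exists$ picks $U:A\to\wp R[s]$ with $(R[s],U)\models\Theta(a,\mathrm{Val}(s))$, then $\forall$ picks $(b,t)$ with $t\in U(b)$; stuck player loses; an infinite match is won by $\exists$ iff its stream of states is in $\mathit{Acc}$. $\mathbb{G}\equiv\mathbb{A}$ means: for all pointed Kripke models $(\mathbb{S},s)$, $(v_I,s)$ is winning for $\exists$ in $\mathcal{E}(\mathbb{G},\mathbb{S})$ iff $(a_I,s)$ is winning for $\exists$ in $\mathcal{A}(\mathbb{A},\mathbb{S})$. Macrostates. $M_\Omega := \wp(V\times\mathsf{Ran}(\Omega)\times V)$. $\mathsf{Ran}(m) := \{v \mid (u,k,v)\in m \text{ for some } u,k\}$. Composition: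 $m;m'$ is the set of $(v,k,v'')$ such that there are $(v,k',v')\in m$, $(v',k'',v'')\in m'$ with $k=\max(k',k'')$. $\Delta_U := \{(u,0,u)\mid u\in U\}$, $\Delta_v:=\Delta_{\{v\}}$. A set $U\subseteq V$ is compatible with a color $c\in\wp\mathsf{Prop}$ if for all $u\in U$: $L(u)\neq\bot$, $L(u)=p$ implies $p\in c$, $L(u)=\overline{p}$ implies $p\notin c$. A trace on a stream $(m_i)_{i\in\omega}$ of macrostates is $(v_i,k_i)_{i\in\omega}$ with $(v_i,k_i,v_{i+1})\in m_i$; it is bad if the maximum $k$ occurring as $k_i$ for infinitely many $i$ is odd. $\mathrm{NBT}_\Omega$ is the set of streams of macrostates with no bad trace. Local strategies. A local strategy is $\chi:V_\lor\to V$ with $\chi(v)\in E[v]$. For $v\in V$, $\mathit{SP}_\chi(v)$ is the least set $S$ of finite sequences with: $v\chi(v)\in S$ if $v\in V_\lor$; $vw\in S$ for all $w\in E[v]$ if $v\in V_\land$; if $\pi\in S$ and its last element $u\in V_\lor$ then $\pi\chi(u)\in S$; if $\pi\in S$ and last element $u\in V_\land$ then $\pi w\in S$ for all $w\in E[u]$. For $\pi = vv_1\cdots v_j$ put $\widetilde\Omega(\pi) := \max\{\Omega(v_i)\mid 1\le i\le j\}$. Define $e^-_\chi := \{(v,\widetilde\Omega(\pi),\mathit{last}(\pi)) \mid v\in V_\lor\cup V_\land,\ \pi\in\mathit{SP}_\chi(v)\}$ and $e_\chi := e^-_\chi\cup\Delta_V$. $\chi$ is locally compatible with a color $c$ on a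 macrostate $m$ if (i) $\mathsf{Ran}(m;e_\chi)$ is compatible with $c$, and (ii) the stream $m;(e^-_\chi)^\omega$, i.e. $(m, e^-_\chi, e^-_\chi,\dots)$, has no bad trace. Demands. $d_\Box(m) := \{(u,\Omega(v),v)\mid u\in\mathsf{Ran}(m)\cap V_\Box,\ v\in E[u]\}$; for $x\in\mathsf{Ran}(m)\cap V_\Diamond$, $d_x(m) := \{(x,\Omega(v),v)\mid v\in E[x]\}\cup d_\Box(m)$. The automaton $\mathbb{A}_{\mathbb{G}}$: state set $M_\Omega$, initial state $m_I := \Delta_{v_I}$, acceptance condition $\mathrm{NBT}_\Omega$. For $m\in M_\Omega$ and local strategy $\chi$, $A_{m,\chi} := \{e_\chi; d_\Box(m;e_\chi)\}\cup\{e_\chi; d_x(m;e_\chi)\mid x\in\mathsf{Ran}(m;e_\chi)\cap V_\Diamond\}$; $\theta(m,c,\chi) := \nabla A_{m,\chi}$ if $\mathsf{Ran}(m;e_\chi)\cap V_\Diamond\neq\varnothing$, and $\theta(m,c,\chi):=\nabla A_{m,\chi}\lor\nabla\varnothing$ otherwise; $\Theta(m,c) := \bigvee\{\theta(m,c,\chi)\mid \chi \text{ a local strategy locally compatible with } c \text{ on } m\}$. *)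

theory Defs
  imports Main
begin

datatype 'p label = LTop | LBot | LLit 'p | LNLit 'p | LAnd | LOr | LDia | LBox | LEps

record ('v, 'p) pformula =
  pV  :: "'v set"
  pE  :: "('v \<times> 'v) set"
  pL  :: "'v \<Rightarrow> 'p label"
  pOm :: "'v \<Rightarrow> nat"
  pvI :: "'v"

definition succs :: "('v, 'p) pformula \<Rightarrow> 'v \<Rightarrow> 'v set" where
  "succs G v = {u. (v, u) \<in> pE G}"

definition Vlab :: "('v, 'p) pformula \<Rightarrow> 'p label \<Rightarrow> 'v set" where
  "Vlab G l = {v \<in> pV G. pL G v = l}"

definition is_literal_label :: "'p label \<Rightarrow> bool" where
  "is_literal_label l = (l = LTop \<or> l = LBot \<or> (\<exists>p. l = LLit p \<or> l = LNLit p))"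

text \<open>Well-formedness of a parity formula (with total priority map; the condition that
  every cycle meets the domain of the priority map is then automatic).\<close>
definition parity_formula :: "('v, 'p) pformula \<Rightarrow> bool" where
  "parity_formula G \<longleftrightarrow>
     finite (pV G) \<and> pvI G \<in> pV G \<and> pE G \<subseteq> pV G \<times> pV G \<and>
     (\<forall>v \<in> pV G. is_literal_label (pL G v) \<longrightarrow> succs G v = {}) \<and>
     (\<forall>v \<in> pV G. pL G v \<in> {LDia, LBox, LEps} \<longrightarrow> (\<exists>!u. u \<in> succs G v))"

section \<open>Two-player games (player True = \<exists>, False = \<forall>)\<close>

text \<open>A game: owner of each position, move sets, and the winning condition for \<exists> on
  infinite matches. A finite maximal match is lost by the owner of its last position
  (the stuck player).\<close>

definition path_ok :: "('q \<Rightarrow> 'q set) \<Rightarrow> 'q list \<Rightarrow> bool" where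
  "path_ok mv h \<longleftrightarrow> (\<forall>i. Suc i < length h \<longrightarrow> h ! Suc i \<in> mv (h ! i))"

definition consistent_fin :: "('q \<Rightarrow> bool) \<Rightarrow> ('q list \<Rightarrow> 'q) \<Rightarrow> 'q list \<Rightarrow> bool" where
  "consistent_fin own \<sigma> h \<longleftrightarrow>
     (\<forall>i. Suc i < length h \<longrightarrow> own (h ! i) \<longrightarrow> h ! Suc i = \<sigma> (take (Suc i) h))"

definition consistent_inf :: "('q \<Rightarrow> bool) \<Rightarrow> ('q list \<Rightarrow> 'q) \<Rightarrow> (nat \<Rightarrow> 'q) \<Rightarrow> bool" where
  "consistent_inf own \<sigma> \<pi> \<longleftrightarrow>
     (\<forall>i. own (\<pi> i) \<longrightarrow> \<pi> (Suc i) = \<sigma> (map \<pi> [0..<Suc i]))"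

definition E_winning_strategy ::
  "('q \<Rightarrow> bool) \<Rightarrow> ('q \<Rightarrow> 'q set) \<Rightarrow> ((nat \<Rightarrow> 'q) \<Rightarrow> bool) \<Rightarrow> ('q list \<Rightarrow> 'q) \<Rightarrow> 'q \<Rightarrow> bool" where
  "E_winning_strategy own mv W \<sigma> q \<longleftrightarrow>
     (\<forall>h. h \<noteq> [] \<and> hd h = q \<and> path_ok mv h \<and> consistent_fin own \<sigma> h \<longrightarrow>
          (own (last h) \<and> mv (last h) \<noteq> {} \<longrightarrow> \<sigma> h \<in> mv (last h)) \<and>
          (mv (last h) = {} \<longrightarrow> \<not> own (last h))) \<and>
     (\<forall>\<pi>. \<pi> 0 = q \<and> (\<forall>i. \<pi> (Suc i) \<in> mv (\<pi> i)) \<and> consistent_inf own \<sigma> \<pi> \<longrightarrow> W \<pi>)"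

definition E_wins ::
  "('q \<Rightarrow> bool) \<Rightarrow> ('q \<Rightarrow> 'q set) \<Rightarrow> ((nat \<Rightarrow> 'q) \<Rightarrow> bool) \<Rightarrow> 'q \<Rightarrow> bool" where
  "E_wins own mv W q \<longleftrightarrow> (\<exists>\<sigma>. E_winning_strategy own mv W \<sigma> q)"

definition inf_often :: "(nat \<Rightarrow> bool) \<Rightarrow> bool" where
  "inf_often P \<longleftrightarrow> (\<forall>n. \<exists>i>n. P i)"

section \<open>Evaluation game of a parity formula on a Kripke model (R, Val) with carrier UNIV\<close>

text \<open>Terminal (literal/constant) positions: \<exists> wins there iff the position is owned by \<forall>
  (who then is stuck).\<close>
fun eval_owner :: "('v, 'p) pformula \<Rightarrow> ('s \<Rightarrow> 'p set) \<Rightarrow> 'v \<times> 's \<Rightarrow> bool" where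
  "eval_owner G Val (v, s) =
     (case pL G v of
        LTop \<Rightarrow> False
      | LBot \<Rightarrow> True
      | LLit p \<Rightarrow> p \<notin> Val s
      | LNLit p \<Rightarrow> p \<in> Val s
      | LAnd \<Rightarrow> False
      | LOr \<Rightarrow> True
      | LDia \<Rightarrow> True
      | LBox \<Rightarrow> False
      | LEps \<Rightarrow> True)"

fun eval_moves :: "('v, 'p) pformula \<Rightarrow> 's rel \<Rightarrow> 'v \<times> 's \<Rightarrow> ('v \<times> 's) set" where
  "eval_moves G R (v, s) =
     (case pL G v of
        LAnd \<Rightarrow> {(u, s) | u. (v, u) \<in> pE G}
      | LOr \<Rightarrow> {(u, s) | u. (v, u) \<in> pE G}
      | LEps \<Rightarrow> {(u, s) | u. (v, u) \<in> pE G}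
      | LDia \<Rightarrow> {(u, t) | u t. (v, u) \<in> pE G \<and> (s, t) \<in> R}
      | LBox \<Rightarrow> {(u, t) | u t. (v, u) \<in> pE G \<and> (s, t) \<in> R}
      | _ \<Rightarrow> {})"

definition eval_wincond :: "('v, 'p) pformula \<Rightarrow> (nat \<Rightarrow> 'v \<times> 's) \<Rightarrow> bool" where
  "eval_wincond G \<pi> \<longleftrightarrow> even (Max {k. inf_often (\<lambda>i. pOm G (fst (\<pi> i)) = k)})"

definition eval_E_wins :: "('v, 'p) pformula \<Rightarrow> 's rel \<Rightarrow> ('s \<Rightarrow> 'p set) \<Rightarrow> 'v \<times> 's \<Rightarrow> bool" where
  "eval_E_wins G R Val q = E_wins (eval_owner G Val) (eval_moves G R) (eval_wincond G) q"

text \<open>Theta a c is a finite disjunction of cover formulas \<nabla>B, represented by the set of the B's.\<close>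
record ('a, 'p) dma =
  aStates :: "'a set"
  aTheta  :: "'a \<Rightarrow> 'p set \<Rightarrow> 'a set set"
  aAcc    :: "(nat \<Rightarrow> 'a) \<Rightarrow> bool"
  aInit   :: "'a"

definition nabla_sat :: "'x set \<Rightarrow> ('a \<Rightarrow> 'x set) \<Rightarrow> 'a set \<Rightarrow> bool" where
  "nabla_sat X U B \<longleftrightarrow> (\<forall>b \<in> B. \<exists>x \<in> X. x \<in> U b) \<and> (\<forall>x \<in> X. \<exists>b \<in> B. x \<in> U b)"

datatype ('a, 's) apos = ABasic 'a 's | AMark "'a \<Rightarrow> 's set"

fun acc_owner :: "('a, 's) apos \<Rightarrow> bool" where
  "acc_owner (ABasic a s) = True"
| "acc_owner (AMark U) = False"

fun acc_moves :: "('a, 'p) dma \<Rightarrow> 's rel \<Rightarrow> ('s \<Rightarrow> 'p set) \<Rightarrow> ('a, 's) apos \<Rightarrow> ('a, 's) apos set" where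
  "acc_moves A R Val (ABasic a s) =
     {AMark U | U. (\<forall>b. U b \<subseteq> R `` {s}) \<and> (\<forall>b. b \<notin> aStates A \<longrightarrow> U b = {}) \<and>
                   (\<exists>B \<in> aTheta A a (Val s). nabla_sat (R `` {s}) U B)}"
| "acc_moves A R Val (AMark U) = {ABasic b t | b t. b \<in> aStates A \<and> t \<in> U b}"

fun apos_state :: "('a, 's) apos \<Rightarrow> 'a" where
  "apos_state (ABasic a s) = a"
| "apos_state (AMark U) = undefined"

text \<open>Matches start at a basic position and alternate; the stream of states is read off
  the basic positions, i.e. the even indices.\<close>
definition acc_wincond :: "('a, 'p) dma \<Rightarrow> (nat \<Rightarrow> ('a, 's) apos) \<Rightarrow> bool" where
  "acc_wincond A \<pi> \<longleftrightarrow> aAcc A (\<lambda>i. apos_state (\<pi> (2 * i)))"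

definition acc_E_wins :: "('a, 'p) dma \<Rightarrow> 's rel \<Rightarrow> ('s \<Rightarrow> 'p set) \<Rightarrow> ('a, 's) apos \<Rightarrow> bool" where
  "acc_E_wins A R Val q = E_wins acc_owner (acc_moves A R Val) (acc_wincond A) q"

type_synonym 'v macro = "('v \<times> nat \<times> 'v) set"

definition Ran_m :: "'v macro \<Rightarrow> 'v set" where
  "Ran_m m = {v. \<exists>u k. (u, k, v) \<in> m}"

definition mcomp :: "'v macro \<Rightarrow> 'v macro \<Rightarrow> 'v macro" (infixl ";;" 70) where
  "m ;; m' = {(v, k, v'') | v k v''. \<exists>k' k'' v'. (v, k', v') \<in> m \<and> (v', k'', v'') \<in> m' \<and> k = max k' k''}"

definition Delta :: "'v set \<Rightarrow> 'v macro" where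
  "Delta U = {(u, 0, u) | u. u \<in> U}"

definition compatible :: "('v, 'p) pformula \<Rightarrow> 'v set \<Rightarrow> 'p set \<Rightarrow> bool" where
  "compatible G U c \<longleftrightarrow>
     (\<forall>u \<in> U. pL G u \<noteq> LBot \<and> (\<forall>p. pL G u = LLit p \<longrightarrow> p \<in> c) \<and> (\<forall>p. pL G u = LNLit p \<longrightarrow> p \<notin> c))"

definition bad_trace :: "(nat \<Rightarrow> 'v macro) \<Rightarrow> (nat \<Rightarrow> 'v) \<Rightarrow> (nat \<Rightarrow> nat) \<Rightarrow> bool" where
  "bad_trace ms vs ks \<longleftrightarrow>
     (\<forall>i. (vs i, ks i, vs (Suc i)) \<in> ms i) \<and> odd (Max {k. inf_often (\<lambda>i. ks i = k)})"

definition NBT :: "(nat \<Rightarrow> 'v macro) \<Rightarrow> bool" where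
  "NBT ms \<longleftrightarrow> \<not> (\<exists>vs ks. bad_trace ms vs ks)"

definition local_strategy :: "('v, 'p) pformula \<Rightarrow> ('v \<Rightarrow> 'v) \<Rightarrow> bool" where
  "local_strategy G \<chi> \<longleftrightarrow> (\<forall>v \<in> Vlab G LOr. \<chi> v \<in> succs G v)"

inductive_set SP :: "('v, 'p) pformula \<Rightarrow> ('v \<Rightarrow> 'v) \<Rightarrow> 'v \<Rightarrow> 'v list set"
  for G :: "('v, 'p) pformula" and \<chi> :: "'v \<Rightarrow> 'v" and v :: 'v where
  sp_or: "v \<in> Vlab G LOr \<Longrightarrow> [v, \<chi> v] \<in> SP G \<chi> v"
| sp_and: "v \<in> Vlab G LAnd \<Longrightarrow> w \<in> succs G v \<Longrightarrow> [v, w] \<in> SP G \<chi> v"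
| sp_or_step: "\<pi> \<in> SP G \<chi> v \<Longrightarrow> last \<pi> \<in> Vlab G LOr \<Longrightarrow> \<pi> @ [\<chi> (last \<pi>)] \<in> SP G \<chi> v"
| sp_and_step: "\<pi> \<in> SP G \<chi> v \<Longrightarrow> last \<pi> \<in> Vlab G LAnd \<Longrightarrow> w \<in> succs G (last \<pi>) \<Longrightarrow> \<pi> @ [w] \<in> SP G \<chi> v"

definition Om_path :: "('v, 'p) pformula \<Rightarrow> 'v list \<Rightarrow> nat" where
  "Om_path G \<pi> = Max (pOm G ` set (tl \<pi>))"

definition e_minus :: "('v, 'p) pformula \<Rightarrow> ('v \<Rightarrow> 'v) \<Rightarrow> 'v macro" where
  "e_minus G \<chi> = {(v, Om_path G \<pi>, last \<pi>) | v \<pi>. v \<in> Vlab G LOr \<union> Vlab G LAnd \<and> \<pi> \<in> SP G \<chi> v}"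

definition e_chi :: "('v, 'p) pformula \<Rightarrow> ('v \<Rightarrow> 'v) \<Rightarrow> 'v macro" where
  "e_chi G \<chi> = e_minus G \<chi> \<union> Delta (pV G)"

definition locally_compatible :: "('v, 'p) pformula \<Rightarrow> ('v \<Rightarrow> 'v) \<Rightarrow> 'p set \<Rightarrow> 'v macro \<Rightarrow> bool" where
  "locally_compatible G \<chi> c m \<longleftrightarrow>
     compatible G (Ran_m (m ;; e_chi G \<chi>)) c \<and>
     NBT (\<lambda>i. if i = 0 then m else e_minus G \<chi>)"

definition d_box :: "('v, 'p) pformula \<Rightarrow> 'v macro \<Rightarrow> 'v macro" where
  "d_box G m = {(u, pOm G v, v) | u v. u \<in> Ran_m m \<inter> Vlab G LBox \<and> v \<in> succs G u}"

definition d_dia :: "('v, 'p) pformula \<Rightarrow> 'v \<Rightarrow> 'v macro \<Rightarrow> 'v macro" where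
  "d_dia G x m = {(x, pOm G v, v) | v. v \<in> succs G x} \<union> d_box G m"

definition A_mchi :: "('v, 'p) pformula \<Rightarrow> 'v macro \<Rightarrow> ('v \<Rightarrow> 'v) \<Rightarrow> 'v macro set" where
  "A_mchi G m \<chi> =
     {e_chi G \<chi> ;; d_box G (m ;; e_chi G \<chi>)} \<union>
     {e_chi G \<chi> ;; d_dia G x (m ;; e_chi G \<chi>) | x. x \<in> Ran_m (m ;; e_chi G \<chi>) \<inter> Vlab G LDia}"

definition theta :: "('v, 'p) pformula \<Rightarrow> 'v macro \<Rightarrow> 'p set \<Rightarrow> ('v \<Rightarrow> 'v) \<Rightarrow> 'v macro set set" where
  "theta G m c \<chi> =
     (if Ran_m (m ;; e_chi G \<chi>) \<inter> Vlab G LDia \<noteq> {} then {A_mchi G m \<chi>}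
      else {A_mchi G m \<chi>, {}})"

definition Theta_G :: "('v, 'p) pformula \<Rightarrow> 'v macro \<Rightarrow> 'p set \<Rightarrow> 'v macro set set" where
  "Theta_G G m c = \<Union> {theta G m c \<chi> | \<chi>. local_strategy G \<chi> \<and> locally_compatible G \<chi> c m}"

definition macrostates :: "('v, 'p) pformula \<Rightarrow> 'v macro set" where
  "macrostates G = Pow (pV G \<times> pOm G ` pV G \<times> pV G)"

definition aut_G :: "('v, 'p) pformula \<Rightarrow> ('v macro, 'p) dma" where
  "aut_G G = \<lparr> aStates = macrostates G, aTheta = Theta_G G, aAcc = NBT,
               aInit = Delta {pvI G} \<rparr>"

end

theory Submission
  imports Defs
begin

section \<open>Limsup of bounded nat sequences\<close>

definition LS :: "(nat \<Rightarrow> nat) \<Rightarrow> nat" where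
  "LS a = Max {k. inf_often (\<lambda>i. a i = k)}"

lemma inf_often_mono: "inf_often P \<Longrightarrow> (\<And>i. P i \<Longrightarrow> Q i) \<Longrightarrow> inf_often Q"
  unfolding inf_often_def by blast

lemma not_inf_often: "\<not> inf_often P \<longleftrightarrow> (\<exists>N. \<forall>i\<ge>N. \<not> P i)"
  unfolding inf_often_def
proof
  assume "\<not> (\<forall>n. \<exists>i>n. P i)"
  then obtain n where "\<forall>i>n. \<not> P i" by blast
  then show "\<exists>N. \<forall>i\<ge>N. \<not> P i" by (intro exI[of _ "Suc n"]) auto
next
  assume "\<exists>N. \<forall>i\<ge>N. \<not> P i"
  then obtain N where "\<forall>i\<ge>N. \<not> P i" by blast
  then show "\<not> (\<forall>n. \<exists>i>n. P i)" by (metis less_imp_le_nat)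
qed

lemma inf_often_finite_split:
  assumes "inf_often (\<lambda>i. a i \<in> A)" "finite A"
  shows "\<exists>k\<in>A. inf_often (\<lambda>i. a i = k)"
proof (rule ccontr)
  assume "\<not> ?thesis"
  then have "\<forall>k\<in>A. \<exists>N. \<forall>i\<ge>N. a i \<noteq> k" by (simp add: not_inf_often)
  then obtain Nf where Nf: "\<forall>k\<in>A. \<forall>i\<ge>Nf k. a i \<noteq> k" by metis
  define N where "N = Max (Nf ` A)"
  have "\<forall>i\<ge>N. a i \<notin> A"
  proof (intro allI impI)
    fix i assume "N \<le> i"
    show "a i \<notin> A"
    proof
      assume "a i \<in> A"
      then have "Nf (a i) \<le> N" unfolding N_def using assms(2) by auto
      then have "Nf (a i) \<le> i" using \<open>N \<le> i\<close> by linarith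
      then show False using Nf \<open>a i \<in> A\<close> by blast
    qed
  qed
  moreover obtain i where "i > N" "a i \<in> A" using assms(1) unfolding inf_often_def by blast
  ultimately show False by auto
qed

lemma LS_char:
  assumes "\<forall>i. a i \<le> d"
  shows "inf_often (\<lambda>i. a i = LS a) \<and> (\<exists>N. \<forall>i\<ge>N. a i \<le> LS a)"
proof -
  let ?K = "{k. inf_often (\<lambda>i. a i = k)}"
  have fin: "finite ?K"
  proof (rule finite_subset[of _ "{..d}"])
    show "?K \<subseteq> {..d}"
    proof
      fix k assume "k \<in> ?K"
      then obtain i where "a i = k" unfolding inf_often_def by auto
      then show "k \<in> {..d}" using assms by auto
    qed
  qed auto
  have "inf_often (\<lambda>i. a i \<in> {..d})" using assms unfolding inf_often_def by auto
  then obtain k0 where "inf_often (\<lambda>i. a i = k0)" using inf_often_finite_split by blast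
  then have ne: "?K \<noteq> {}" by auto
  have 1: "inf_often (\<lambda>i. a i = LS a)" unfolding LS_def using Max_in[OF fin ne] by simp
  have 2: "\<exists>N. \<forall>i\<ge>N. a i \<le> LS a"
  proof (rule ccontr)
    assume nt: "\<not> ?thesis"
    have "inf_often (\<lambda>i. a i \<in> {LS a<..d})"
      unfolding inf_often_def
    proof
      fix n
      obtain i where "i \<ge> Suc n" "\<not> a i \<le> LS a" using nt by blast
      then show "\<exists>i>n. a i \<in> {LS a<..d}" using assms by (intro exI[of _ i]) auto
    qed
    then obtain k where k: "k \<in> {LS a<..d}" "inf_often (\<lambda>i. a i = k)"
      using inf_often_finite_split[of a] by blast
    then have "k \<le> LS a" unfolding LS_def using fin by auto
    then show False using k by auto
  qed
  show ?thesis using 1 2 by blast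
qed

lemma LS_unique:
  assumes "\<forall>i. a i \<le> d" "inf_often (\<lambda>i. a i = K)" "\<exists>N. \<forall>i\<ge>N. a i \<le> K"
  shows "LS a = K"
proof -
  from LS_char[OF assms(1)] obtain N where N: "\<forall>i\<ge>N. a i \<le> LS a" and io: "inf_often (\<lambda>i. a i = LS a)"
    by blast
  from assms(3) obtain M where M: "\<forall>i\<ge>M. a i \<le> K" by blast
  obtain i where "i > max N M" "a i = K" using assms(2) unfolding inf_often_def by blast
  then have "K \<le> LS a" using N by auto
  obtain j where "j > max N M" "a j = LS a" using io unfolding inf_often_def by blast
  then have "LS a \<le> K" using M[rule_format, of j] by simp
  show ?thesis using \<open>K \<le> LS a\<close> \<open>LS a \<le> K\<close> by simp
qed

lemma inf_often_shift: "inf_often (\<lambda>i. P (i + n)) \<longleftrightarrow> inf_often P"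
proof
  assume a: "inf_often (\<lambda>i. P (i + n))"
  show "inf_often P" unfolding inf_often_def
  proof
    fix m
    obtain i where "i > m" "P (i + n)" using a unfolding inf_often_def by blast
    then show "\<exists>i>m. P i" by (intro exI[of _ "i + n"]) simp
  qed
next
  assume a: "inf_often P"
  show "inf_often (\<lambda>i. P (i + n))" unfolding inf_often_def
  proof
    fix m
    obtain i where "i > m + n" "P i" using a unfolding inf_often_def by blast
    then show "\<exists>i>m. P (i + n)" by (intro exI[of _ "i - n"]) simp
  qed
qed

lemma LS_shift:
  assumes "\<forall>i. a i \<le> d"
  shows "LS (\<lambda>i. a (i + n)) = LS a"
proof (rule LS_unique)
  show "\<forall>i. a (i + n) \<le> d" using assms by auto
  show "inf_often (\<lambda>i. a (i + n) = LS a)"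
    using LS_char[OF assms] inf_often_shift[of "\<lambda>i. a i = LS a" n] by simp
  from LS_char[OF assms] obtain N where "\<forall>i\<ge>N. a i \<le> LS a" by blast
  then have "\<forall>i\<ge>N. a (i + n) \<le> LS a" by (metis le_add1 order_trans)
  then show "\<exists>N. \<forall>i\<ge>N. a (i + n) \<le> LS a" by blast
qed

lemma LS_cong:
  assumes "\<forall>i. a i = b i" shows "LS a = LS b"
proof -
  have "a = b" using assms by auto
  then show ?thesis by simp
qed

section \<open>Positional strategies\<close>

definition good :: "('q \<Rightarrow> bool) \<Rightarrow> ('q \<Rightarrow> 'q set) \<Rightarrow> bool \<Rightarrow> 'q set \<Rightarrow> 'q set \<Rightarrow> ('q \<Rightarrow> 'q) \<Rightarrow> bool" where
  "good own mv p T X f \<longleftrightarrow>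
     (\<forall>r \<in> X - T. (own r = p \<longrightarrow> f r \<in> mv r \<and> f r \<in> X) \<and> (own r \<noteq> p \<longrightarrow> mv r \<subseteq> X))"

definition play_in :: "('q \<Rightarrow> bool) \<Rightarrow> ('q \<Rightarrow> 'q set) \<Rightarrow> bool \<Rightarrow> ('q \<Rightarrow> 'q) \<Rightarrow> 'q set \<Rightarrow> (nat \<Rightarrow> 'q) \<Rightarrow> bool" where
  "play_in own mv p f S \<pi> \<longleftrightarrow>
     (\<forall>n. \<pi> n \<in> S) \<and> (\<forall>n. \<pi> (Suc n) \<in> mv (\<pi> n)) \<and> (\<forall>n. own (\<pi> n) = p \<longrightarrow> \<pi> (Suc n) = f (\<pi> n))"

definition wins :: "('q \<Rightarrow> nat) \<Rightarrow> bool \<Rightarrow> (nat \<Rightarrow> 'q) \<Rightarrow> bool" where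
  "wins pr p \<pi> \<longleftrightarrow> (even (LS (\<lambda>i. pr (\<pi> i))) = p)"

definition pwin :: "('q \<Rightarrow> bool) \<Rightarrow> ('q \<Rightarrow> 'q set) \<Rightarrow> ('q \<Rightarrow> nat) \<Rightarrow> bool \<Rightarrow> ('q \<Rightarrow> 'q) \<Rightarrow> 'q \<Rightarrow> bool" where
  "pwin own mv pr p f q \<longleftrightarrow>
     (\<exists>X. q \<in> X \<and> good own mv p {} X f \<and> (\<forall>\<pi>. play_in own mv p f X \<pi> \<longrightarrow> wins pr p \<pi>))"

lemma wins_tail:
  assumes "\<forall>q. pr q \<le> d" "wins pr p (\<lambda>k. \<pi> (k + n))"
  shows "wins pr p \<pi>"
proof -
  have "LS (\<lambda>i. pr (\<pi> (i + n))) = LS (\<lambda>i. pr (\<pi> i))"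
    using LS_shift[of "\<lambda>i. pr (\<pi> i)" d n] assms(1) by simp
  then show ?thesis using assms(2) unfolding wins_def by simp
qed

lemma wf_eventually_const:
  assumes "wf R" "\<forall>n. a (Suc n) = a n \<or> (a (Suc n), a n) \<in> R"
  shows "\<exists>N. \<forall>n\<ge>N. a n = a N"
proof -
  have wfT: "wf (R\<^sup>+)" using wf_trancl assms(1) by blast
  obtain z where z: "z \<in> range a" "\<And>y. (y, z) \<in> R\<^sup>+ \<Longrightarrow> y \<notin> range a"
    using wfE_min[OF wfT, of "a 0" "range a"] by blast
  then obtain N where zN: "z = a N" by blast
  have rt: "(a n, a N) \<in> R\<^sup>*" if "n \<ge> N" for n
    using that
  proof (induction n rule: dec_induct)
    case base then show ?case by simp
  next
    case (step n)
    then show ?case using assms(2)[rule_format, of n]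
      by (metis converse_rtrancl_into_rtrancl)
  qed
  have "a n = a N" if "n \<ge> N" for n
  proof (rule ccontr)
    assume "a n \<noteq> a N"
    then have "(a n, a N) \<in> R\<^sup>+" using rt[OF that] rtrancl_eq_or_trancl by metis
    then show False using z(2) zN by auto
  qed
  then show ?thesis by blast
qed

lemma union_strat:
  fixes Xs :: "'i \<Rightarrow> 'q set" and fs :: "'i \<Rightarrow> 'q \<Rightarrow> 'q"
  assumes wo: "\<forall>i\<in>I. good own mv p T (Xs i) (fs i)"
    and pl: "\<forall>i\<in>I. \<forall>\<pi>. play_in own mv p (fs i) (Xs i - T) \<pi> \<longrightarrow> \<Phi> \<pi>"
    and tl: "\<forall>\<pi> n. \<Phi> (\<lambda>k. \<pi> (k + n)) \<longrightarrow> \<Phi> \<pi>"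
  shows "\<exists>F. good own mv p T (\<Union>i\<in>I. Xs i) F \<and>
             (\<forall>\<pi>. play_in own mv p F ((\<Union>i\<in>I. Xs i) - T) \<pi> \<longrightarrow> \<Phi> \<pi>)"
proof -
  obtain r :: "'i rel" where r: "well_order_on UNIV r" using well_order_on by blast
  then have wfr: "wf (r - Id)" and tot: "total_on UNIV r"
    by (auto simp: well_order_on_def linear_order_on_def)
  define U where "U = (\<Union>i\<in>I. Xs i)"
  define C where "C x = {i \<in> I. x \<in> Xs i}" for x
  have minex: "\<exists>i. i \<in> C x \<and> (\<forall>j\<in>C x. j = i \<or> (i, j) \<in> r)" if "x \<in> U" for x
  proof -
    from that obtain i0 where "i0 \<in> C x" by (auto simp: C_def U_def)
    from wfE_min[OF wfr this] obtain i where i: "i \<in> C x" "\<And>y. (y, i) \<in> r - Id \<Longrightarrow> y \<notin> C x"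
      by blast
    have "\<forall>j\<in>C x. j = i \<or> (i, j) \<in> r"
    proof
      fix j assume "j \<in> C x"
      then have "(j, i) \<notin> r - Id" using i(2) by blast
      then show "j = i \<or> (i, j) \<in> r" using tot unfolding total_on_def by blast
    qed
    then show ?thesis using i(1) by blast
  qed
  define \<iota> where "\<iota> x = (SOME i. i \<in> C x \<and> (\<forall>j\<in>C x. j = i \<or> (i, j) \<in> r))" for x
  have \<iota>p: "\<iota> x \<in> C x \<and> (\<forall>j\<in>C x. j = \<iota> x \<or> (\<iota> x, j) \<in> r)" if "x \<in> U" for x
    using someI_ex[OF minex[OF that]] unfolding \<iota>_def by blast
  define F where "F x = fs (\<iota> x) x" for x
  have gd: "good own mv p T U F"
    unfolding good_def
  proof
    fix x assume x: "x \<in> U - T"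
    then have i: "\<iota> x \<in> I" "x \<in> Xs (\<iota> x)" using \<iota>p[of x] by (auto simp: C_def)
    then have g: "good own mv p T (Xs (\<iota> x)) (fs (\<iota> x))" using wo by blast
    have "x \<in> Xs (\<iota> x) - T" using i x by blast
    then have h: "(own x = p \<longrightarrow> fs (\<iota> x) x \<in> mv x \<and> fs (\<iota> x) x \<in> Xs (\<iota> x)) \<and> (own x \<noteq> p \<longrightarrow> mv x \<subseteq> Xs (\<iota> x))"
      using g unfolding good_def by blast
    have "Xs (\<iota> x) \<subseteq> U" using i(1) unfolding U_def by blast
    then show "(own x = p \<longrightarrow> F x \<in> mv x \<and> F x \<in> U) \<and> (own x \<noteq> p \<longrightarrow> mv x \<subseteq> U)"
      using h unfolding F_def by blast
  qed
  have plays: "\<Phi> \<pi>" if pi: "play_in own mv p F (U - T) \<pi>" for \<pi>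
  proof -
    define a where "a n = \<iota> (\<pi> n)" for n
    have inU: "\<pi> n \<in> U - T" for n using pi unfolding play_in_def by blast
    have ain: "a n \<in> I \<and> \<pi> n \<in> Xs (a n)" for n
      using \<iota>p[of "\<pi> n"] inU[of n] by (auto simp: C_def a_def)
    have nxt: "\<pi> (Suc n) \<in> Xs (a n)" for n
    proof -
      have g: "good own mv p T (Xs (a n)) (fs (a n))" using wo ain by blast
      have m: "\<pi> n \<in> Xs (a n) - T" using ain inU by blast
      show ?thesis
      proof (cases "own (\<pi> n) = p")
        case True
        then have "\<pi> (Suc n) = fs (a n) (\<pi> n)" using pi unfolding play_in_def F_def a_def by blast
        moreover have "own (\<pi> n) = p \<longrightarrow> fs (a n) (\<pi> n) \<in> Xs (a n)" using g m unfolding good_def by blast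
        ultimately show ?thesis using True by simp
      next
        case False
        then show ?thesis using g m pi unfolding good_def play_in_def by blast
      qed
    qed
    have step: "\<forall>n. a (Suc n) = a n \<or> (a (Suc n), a n) \<in> r - Id"
    proof
      fix n
      have "a n \<in> C (\<pi> (Suc n))" using nxt ain by (auto simp: C_def)
      then have "a n = a (Suc n) \<or> (a (Suc n), a n) \<in> r"
        using \<iota>p[of "\<pi> (Suc n)"] inU[of "Suc n"] unfolding a_def by blast
      then show "a (Suc n) = a n \<or> (a (Suc n), a n) \<in> r - Id" by auto
    qed
    obtain N where N: "\<forall>n\<ge>N. a n = a N" using wf_eventually_const[OF wfr step] by blast
    define i where "i = a N"
    have "play_in own mv p (fs i) (Xs i - T) (\<lambda>k. \<pi> (k + N))"
      unfolding play_in_def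
    proof (intro conjI allI impI)
      fix n
      have e: "a (n + N) = i" using N[rule_format, of "n + N"] i_def by simp
      show "\<pi> (n + N) \<in> Xs i - T" using ain[of "n + N"] inU[of "n + N"] e by simp
      show "\<pi> (Suc n + N) \<in> mv (\<pi> (n + N))" using pi unfolding play_in_def by simp
      assume "own (\<pi> (n + N)) = p"
      then have "\<pi> (Suc (n + N)) = F (\<pi> (n + N))" using pi unfolding play_in_def by blast
      then show "\<pi> (Suc n + N) = fs i (\<pi> (n + N))" using e unfolding F_def a_def by simp
    qed
    moreover have "i \<in> I" using ain[of N] i_def by simp
    ultimately have "\<Phi> (\<lambda>k. \<pi> (k + N))" using pl by blast
    then show ?thesis using tl[rule_format, of \<pi> N] by simp
  qed
  show ?thesis using gd plays unfolding U_def by blast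
qed

lemma extend_strat:
  assumes g: "good own mv p T X f"
    and pl: "\<forall>\<pi>. play_in own mv p f (X - T) \<pi> \<longrightarrow> \<Phi> \<pi>"
    and tl: "\<forall>\<pi> n. \<Phi> (\<lambda>k. \<pi> (k + n)) \<longrightarrow> \<Phi> \<pi>"
    and r: "r \<notin> X" "r \<notin> T"
    and c: "(own r = p \<and> r' \<in> mv r \<and> r' \<in> X) \<or> (own r \<noteq> p \<and> mv r \<subseteq> X)"
  shows "good own mv p T (insert r X) (f(r := r')) \<and>
         (\<forall>\<pi>. play_in own mv p (f(r := r')) (insert r X - T) \<pi> \<longrightarrow> \<Phi> \<pi>)"
proof
  show "good own mv p T (insert r X) (f(r := r'))"
    using g c r unfolding good_def by auto
  show "\<forall>\<pi>. play_in own mv p (f(r := r')) (insert r X - T) \<pi> \<longrightarrow> \<Phi> \<pi>"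
  proof (intro allI impI)
    fix \<pi> assume pi: "play_in own mv p (f(r := r')) (insert r X - T) \<pi>"
    have nx: "\<pi> (Suc n) \<in> X" for n
    proof (cases "\<pi> n = r")
      case True
      then show ?thesis using pi c unfolding play_in_def by (cases "own r = p") auto
    next
      case False
      then have m: "\<pi> n \<in> X - T" using pi unfolding play_in_def by blast
      show ?thesis
      proof (cases "own (\<pi> n) = p")
        case True
        then have "\<pi> (Suc n) = f (\<pi> n)" using pi False unfolding play_in_def by auto
        moreover have "own (\<pi> n) = p \<longrightarrow> f (\<pi> n) \<in> X" using g m unfolding good_def by blast
        ultimately show ?thesis using True by simp
      next
        case False
        then show ?thesis using g m pi unfolding good_def play_in_def by blast
      qed
    qed
    have "play_in own mv p f (X - T) (\<lambda>k. \<pi> (k + 1))"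
      unfolding play_in_def
    proof (intro conjI allI impI)
      fix n
      show "\<pi> (n + 1) \<in> X - T" using nx[of n] pi unfolding play_in_def by auto
      show "\<pi> (Suc n + 1) \<in> mv (\<pi> (n + 1))" using pi unfolding play_in_def by simp
      assume "own (\<pi> (n + 1)) = p"
      moreover have "\<pi> (n + 1) \<noteq> r" using nx[of n] r by auto
      ultimately show "\<pi> (Suc n + 1) = f (\<pi> (n + 1))" using pi unfolding play_in_def by auto
    qed
    then have "\<Phi> (\<lambda>k. \<pi> (k + 1))" using pl by blast
    then show "\<Phi> \<pi>" using tl[rule_format, of \<pi> 1] by simp
  qed
qed

lemma wins_cong:
  assumes "\<forall>i. pr1 (\<pi> i) = pr2 (\<pi> i)"
  shows "wins pr1 p \<pi> = wins pr2 p \<pi>"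
  using assms unfolding wins_def by simp

theorem posdet:
  fixes own :: "'q \<Rightarrow> bool"
  shows "\<forall>mv pr. (\<forall>q. pr q \<le> d) \<longrightarrow>
           (\<forall>q. (\<exists>f. pwin own mv pr True f q) \<or> (\<exists>g. pwin own mv pr False g q))"
proof (induction d rule: less_induct)
  case (less d)
  show ?case
  proof (intro allI impI)
    fix mv :: "'q \<Rightarrow> 'q set" and pr :: "'q \<Rightarrow> nat" and q :: 'q
    assume bd: "\<forall>q. pr q \<le> d"
    define pp where "pp = even d"
    define oo where "oo = (\<not> pp)"
    have tailw: "\<forall>\<pi> n. wins pr pl (\<lambda>k. \<pi> (k + n)) \<longrightarrow> wins pr pl \<pi>" for pl
      using wins_tail[OF bd] by blast
    define J where "J = {(X, g). good own mv oo {} X g \<and> (\<forall>\<pi>. play_in own mv oo g X \<pi> \<longrightarrow> wins pr oo \<pi>)}"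
    define Y where "Y = (\<Union>j\<in>J. fst j)"
    have "\<exists>F. good own mv oo {} Y F \<and> (\<forall>\<pi>. play_in own mv oo F (Y - {}) \<pi> \<longrightarrow> wins pr oo \<pi>)"
      unfolding Y_def
    proof (rule union_strat)
      show "\<forall>i\<in>J. good own mv oo {} (fst i) (snd i)" unfolding J_def by auto
      show "\<forall>i\<in>J. \<forall>\<pi>. play_in own mv oo (snd i) (fst i - {}) \<pi> \<longrightarrow> wins pr oo \<pi>"
        unfolding J_def by auto
      show "\<forall>\<pi> n. wins pr oo (\<lambda>k. \<pi> (k + n)) \<longrightarrow> wins pr oo \<pi>" using tailw by blast
    qed
    then obtain gY where gY: "good own mv oo {} Y gY" "\<forall>\<pi>. play_in own mv oo gY Y \<pi> \<longrightarrow> wins pr oo \<pi>"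
      by auto
    have YJ: "X \<subseteq> Y" if "good own mv oo {} X g" "\<forall>\<pi>. play_in own mv oo g X \<pi> \<longrightarrow> wins pr oo \<pi>" for X g
    proof -
      have "(X, g) \<in> J" using that unfolding J_def by blast
      then show ?thesis unfolding Y_def by force
    qed
    have extY: "r \<in> Y" if "r \<notin> Y" "(own r = oo \<and> r' \<in> mv r \<and> r' \<in> Y) \<or> (own r \<noteq> oo \<and> mv r \<subseteq> Y)" for r r'
    proof -
      have "good own mv oo {} (insert r Y) (gY(r := r')) \<and>
         (\<forall>\<pi>. play_in own mv oo (gY(r := r')) (insert r Y - {}) \<pi> \<longrightarrow> wins pr oo \<pi>)"
        by (rule extend_strat[of own mv oo "{}" Y gY "wins pr oo"]) (use gY tailw that in auto)
      then have "insert r Y \<subseteq> Y" using YJ by auto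
      then show ?thesis by blast
    qed
    define Z where "Z = - Y"
    have Z1: "mv r \<subseteq> Z" if "r \<in> Z" "own r = oo" for r
      using extY[of r] that unfolding Z_def by blast
    have Z2: "\<exists>r'\<in>mv r. r' \<in> Z" if "r \<in> Z" "own r = pp" for r
    proof (rule ccontr)
      assume "\<not> ?thesis"
      then have "mv r \<subseteq> Y" unfolding Z_def by blast
      moreover have "own r \<noteq> oo" using that oo_def by simp
      ultimately show False using extY[of r] that unfolding Z_def by blast
    qed
    define mvZ where "mvZ r = mv r \<inter> Z" for r
    define D where "D = {r \<in> Z. pr r = d}"
    define I where "I = {(X, f). X \<subseteq> Z \<and> good own mvZ pp D X f \<and> (\<forall>\<pi>. play_in own mvZ pp f (X - D) \<pi> \<longrightarrow> False)}"
    define R0 where "R0 = (\<Union>i\<in>I. fst i)"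
    have "\<exists>F. good own mvZ pp D R0 F \<and> (\<forall>\<pi>. play_in own mvZ pp F (R0 - D) \<pi> \<longrightarrow> False)"
      unfolding R0_def
    proof (rule union_strat)
      show "\<forall>i\<in>I. good own mvZ pp D (fst i) (snd i)" unfolding I_def by auto
      show "\<forall>i\<in>I. \<forall>\<pi>. play_in own mvZ pp (snd i) (fst i - D) \<pi> \<longrightarrow> False"
        unfolding I_def by auto
    qed simp
    then obtain fA where fA: "good own mvZ pp D R0 fA" "\<forall>\<pi>. play_in own mvZ pp fA (R0 - D) \<pi> \<longrightarrow> False"
      by auto
    define R where "R = R0 \<union> D"
    have R0Z: "R0 \<subseteq> Z" unfolding R0_def I_def by auto
    have RZ: "R \<subseteq> Z" unfolding R_def D_def using R0Z by auto
    have RD: "R - D = R0 - D" unfolding R_def by auto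
    have fAR: "good own mvZ pp D R fA" using fA(1) RD unfolding good_def R_def by auto
    have plR: "\<forall>\<pi>. play_in own mvZ pp fA (R - D) \<pi> \<longrightarrow> False" using fA(2) RD by simp
    have R1: False if "r \<in> Z" "r \<notin> R" "own r = pp" "r' \<in> mv r" "r' \<in> R" for r r'
    proof -
      have "good own mvZ pp D (insert r R) (fA(r := r')) \<and>
         (\<forall>\<pi>. play_in own mvZ pp (fA(r := r')) (insert r R - D) \<pi> \<longrightarrow> False)"
        by (rule extend_strat[of own mvZ pp D R fA "\<lambda>_. False"])
           (use fAR plR that RZ in \<open>auto simp: mvZ_def R_def\<close>)
      moreover have "insert r R \<subseteq> Z" using that RZ by auto
      ultimately have "(insert r R, fA(r := r')) \<in> I" unfolding I_def by auto
      then have "r \<in> R0" unfolding R0_def by force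
      then show False using that unfolding R_def by blast
    qed
    define S where "S = Z - R"
    define mvS where "mvS r = mv r \<inter> S" for r
    define prS where "prS r = (if r \<in> S then pr r else 0)" for r
    have Swin: "\<exists>f. pwin own mvS prS pp f r" if rS: "r \<in> S" for r
    proof -
      have "pr r \<noteq> d" using rS unfolding S_def R_def D_def by auto
      then have dpos: "pr r < d" using bd by (metis le_neq_implies_less)
      have bdS: "\<forall>q. prS q \<le> d - 1"
      proof
        fix q show "prS q \<le> d - 1"
        proof (cases "q \<in> S")
          case True
          then have "pr q \<noteq> d" unfolding S_def R_def D_def by auto
          moreover have "pr q \<le> d" using bd by blast
          ultimately show ?thesis using True unfolding prS_def by simp
        qed (simp add: prS_def)
      qed
      have "d - 1 < d" using dpos by simp
      then have ih: "(\<exists>f. pwin own mvS prS True f r) \<or> (\<exists>g. pwin own mvS prS False g r)"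
        using less.IH bdS by blast
      have noo: False if "pwin own mvS prS oo g r" for g
      proof -
        have "\<exists>X. r \<in> X \<and> good own mvS oo {} X g \<and> (\<forall>\<pi>. play_in own mvS oo g X \<pi> \<longrightarrow> wins prS oo \<pi>)"
          using that unfolding pwin_def .
        then obtain X where X: "r \<in> X" "good own mvS oo {} X g" "\<forall>\<pi>. play_in own mvS oo g X \<pi> \<longrightarrow> wins prS oo \<pi>"
          by blast
        define X' where "X' = (X \<inter> S) \<union> Y"
        define h where "h x = (if x \<in> Y then gY x else g x)" for x
        have SY: "S \<inter> Y = {}" unfolding S_def Z_def by blast
        have gh: "good own mv oo {} X' h"
          unfolding good_def
        proof
          fix x assume x: "x \<in> X' - {}"
          show "(own x = oo \<longrightarrow> h x \<in> mv x \<and> h x \<in> X') \<and> (own x \<noteq> oo \<longrightarrow> mv x \<subseteq> X')"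
          proof (cases "x \<in> Y")
            case True
            then show ?thesis using gY(1) unfolding good_def h_def X'_def by auto
          next
            case False
            then have xs: "x \<in> X" "x \<in> S" using x unfolding X'_def by auto
            have a1: "own x = oo \<longrightarrow> h x \<in> mv x \<and> h x \<in> X'"
              using X(2) xs False unfolding good_def h_def X'_def mvS_def by auto
            have a2: "own x \<noteq> oo \<longrightarrow> mv x \<subseteq> X'"
            proof (intro impI subsetI)
              fix y assume o: "own x \<noteq> oo" and y: "y \<in> mv x"
              show "y \<in> X'"
              proof (cases "y \<in> Y")
                case True then show ?thesis unfolding X'_def by blast
              next
                case False
                then have "y \<in> Z" unfolding Z_def by blast
                moreover have "y \<notin> R"
                  using R1[of x y] xs o y \<open>y \<in> Z\<close> unfolding S_def oo_def by auto
                ultimately have "y \<in> S" unfolding S_def by blast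
                then have "y \<in> mvS x" using y unfolding mvS_def by blast
                then have "y \<in> X" using X(2) xs o unfolding good_def by blast
                then show ?thesis using \<open>y \<in> S\<close> unfolding X'_def by blast
              qed
            qed
            show ?thesis using a1 a2 by blast
          qed
        qed
        have ph: "wins pr oo \<pi>" if pi: "play_in own mv oo h X' \<pi>" for \<pi>
        proof (cases "\<exists>n. \<pi> n \<in> Y")
          case True
          then obtain n where n: "\<pi> n \<in> Y" by blast
          have stay: "\<pi> (n + k) \<in> Y" for k
          proof (induction k)
            case 0 then show ?case using n by simp
          next
            case (Suc k)
            show ?case
            proof (cases "own (\<pi> (n + k)) = oo")
              case True
              then have "\<pi> (Suc (n + k)) = gY (\<pi> (n + k))" using pi Suc unfolding play_in_def h_def by auto
              moreover have "gY (\<pi> (n + k)) \<in> Y" using gY(1) Suc True unfolding good_def by blast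
              ultimately show ?thesis by simp
            next
              case False
              then show ?thesis using gY(1) Suc pi unfolding good_def play_in_def by auto
            qed
          qed
          have "play_in own mv oo gY Y (\<lambda>k. \<pi> (k + n))"
            unfolding play_in_def
          proof (intro conjI allI impI)
            fix k
            show "\<pi> (k + n) \<in> Y" using stay[of k] by (simp add: add.commute)
            show "\<pi> (Suc k + n) \<in> mv (\<pi> (k + n))" using pi unfolding play_in_def by simp
            assume "own (\<pi> (k + n)) = oo"
            then show "\<pi> (Suc k + n) = gY (\<pi> (k + n))"
              using pi stay[of k] unfolding play_in_def h_def by (simp add: add.commute)
          qed
          then have "wins pr oo (\<lambda>k. \<pi> (k + n))" using gY(2) by blast
          then show ?thesis using tailw by blast
        next
          case False
          then have inXS: "\<pi> n \<in> X \<and> \<pi> n \<in> S" for n using pi unfolding play_in_def X'_def by blast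
          have "play_in own mvS oo g X \<pi>"
            unfolding play_in_def
          proof (intro conjI allI impI)
            fix n
            show "\<pi> n \<in> X" using inXS by blast
            show "\<pi> (Suc n) \<in> mvS (\<pi> n)" using pi inXS[of "Suc n"] unfolding play_in_def mvS_def by blast
            assume "own (\<pi> n) = oo"
            then show "\<pi> (Suc n) = g (\<pi> n)" using pi False unfolding play_in_def h_def by auto
          qed
          then have "wins prS oo \<pi>" using X(3) by blast
          moreover have "\<forall>i. prS (\<pi> i) = pr (\<pi> i)" using inXS unfolding prS_def by simp
          ultimately show ?thesis using wins_cong by metis
        qed
        have "X' \<subseteq> Y" using YJ[OF gh] ph by blast
        then have "r \<in> Y" using X(1) rS unfolding X'_def by blast
        then show False using rS SY by blast
      qed
      show ?thesis
      proof (cases pp)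
        case True
        then show ?thesis using ih noo unfolding oo_def by auto
      next
        case False
        then show ?thesis using ih noo unfolding oo_def by auto
      qed
    qed
    define K where "K = {(X, f). good own mvS pp {} X f \<and> (\<forall>\<pi>. play_in own mvS pp f X \<pi> \<longrightarrow> wins prS pp \<pi>)}"
    have bdS': "\<forall>q. prS q \<le> d" using bd unfolding prS_def by simp
    have "\<exists>F. good own mvS pp {} (\<Union>i\<in>K. fst i) F \<and> (\<forall>\<pi>. play_in own mvS pp F ((\<Union>i\<in>K. fst i) - {}) \<pi> \<longrightarrow> wins prS pp \<pi>)"
    proof (rule union_strat)
      show "\<forall>i\<in>K. good own mvS pp {} (fst i) (snd i)" unfolding K_def by auto
      show "\<forall>i\<in>K. \<forall>\<pi>. play_in own mvS pp (snd i) (fst i - {}) \<pi> \<longrightarrow> wins prS pp \<pi>"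
        unfolding K_def by auto
      show "\<forall>\<pi> n. wins prS pp (\<lambda>k. \<pi> (k + n)) \<longrightarrow> wins prS pp \<pi>" using wins_tail[OF bdS'] by blast
    qed
    then obtain fS where fS: "good own mvS pp {} (\<Union>i\<in>K. fst i) fS"
      "\<forall>\<pi>. play_in own mvS pp fS (\<Union>i\<in>K. fst i) \<pi> \<longrightarrow> wins prS pp \<pi>" by auto
    have SK: "S \<subseteq> (\<Union>i\<in>K. fst i)"
    proof
      fix r assume "r \<in> S"
      then obtain f X where "r \<in> X" "good own mvS pp {} X f" "\<forall>\<pi>. play_in own mvS pp f X \<pi> \<longrightarrow> wins prS pp \<pi>"
        using Swin unfolding pwin_def by blast
      then have "(X, f) \<in> K" unfolding K_def by blast
      then show "r \<in> (\<Union>i\<in>K. fst i)" using \<open>r \<in> X\<close> by force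
    qed
    define F where "F x = (if x \<in> S then fS x else if x \<in> R - D then fA x else (SOME y. y \<in> mv x \<and> y \<in> Z))" for x
    have gF: "good own mv pp {} Z F"
      unfolding good_def
    proof
      fix x assume x: "x \<in> Z - {}"
      have a1: "F x \<in> mv x \<and> F x \<in> Z" if o: "own x = pp"
      proof (cases "x \<in> S")
        case True
        then have "fS x \<in> mvS x" using fS(1) SK o unfolding good_def by blast
        then show ?thesis using True unfolding F_def mvS_def S_def by auto
      next
        case False
        then have xR: "x \<in> R" using x unfolding S_def by blast
        show ?thesis
        proof (cases "x \<in> D")
          case False
          then have "fA x \<in> mvZ x" using fAR xR o unfolding good_def by blast
          then show ?thesis using \<open>x \<notin> S\<close> xR False unfolding F_def mvZ_def by auto
        next
          case True
          have "\<exists>y. y \<in> mv x \<and> y \<in> Z" using Z2[of x] x o by blast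
          then have "(SOME y. y \<in> mv x \<and> y \<in> Z) \<in> mv x \<and> (SOME y. y \<in> mv x \<and> y \<in> Z) \<in> Z"
            by (rule someI_ex)
          then show ?thesis using \<open>x \<notin> S\<close> True unfolding F_def by auto
        qed
      qed
      have a2: "mv x \<subseteq> Z" if "own x \<noteq> pp" using Z1[of x] x that unfolding oo_def by auto
      show "(own x = pp \<longrightarrow> F x \<in> mv x \<and> F x \<in> Z) \<and> (own x \<noteq> pp \<longrightarrow> mv x \<subseteq> Z)"
        using a1 a2 by blast
    qed
    have pF: "wins pr pp \<pi>" if pi: "play_in own mv pp F Z \<pi>" for \<pi>
    proof (cases "inf_often (\<lambda>n. \<pi> n \<in> D)")
      case True
      then have "inf_often (\<lambda>n. pr (\<pi> n) = d)" unfolding D_def by (rule inf_often_mono) auto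
      then have "LS (\<lambda>n. pr (\<pi> n)) = d" using bd by (intro LS_unique[of _ d]) auto
      then show ?thesis unfolding wins_def pp_def by simp
    next
      case False
      then obtain N where N: "\<forall>n\<ge>N. \<pi> n \<notin> D" unfolding not_inf_often by blast
      have inZ: "\<pi> n \<in> Z" for n using pi unfolding play_in_def by blast
      have noR: "\<pi> n \<notin> R" if "n \<ge> N" for n
      proof
        assume n0: "\<pi> n \<in> R"
        have stay: "\<pi> (n + k) \<in> R - D" for k
        proof (induction k)
          case 0 then show ?case using n0 N that by simp
        next
          case (Suc k)
          have nS: "\<pi> (n + k) \<notin> S" using Suc unfolding S_def by blast
          have "\<pi> (Suc (n + k)) \<in> R"
          proof (cases "own (\<pi> (n + k)) = pp")
            case True
            then have "\<pi> (Suc (n + k)) = fA (\<pi> (n + k))" using pi nS Suc unfolding play_in_def F_def by auto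
            then show ?thesis using fAR Suc True unfolding good_def by auto
          next
            case False
            have "\<pi> (Suc (n + k)) \<in> mvZ (\<pi> (n + k))" using pi inZ[of "Suc (n + k)"] unfolding play_in_def mvZ_def by blast
            then show ?thesis using fAR Suc False unfolding good_def by blast
          qed
          moreover have "\<pi> (Suc (n + k)) \<notin> D" using N that by simp
          ultimately show ?case by simp
        qed
        have "play_in own mvZ pp fA (R - D) (\<lambda>k. \<pi> (k + n))"
          unfolding play_in_def
        proof (intro conjI allI impI)
          fix k
          show "\<pi> (k + n) \<in> R - D" using stay[of k] by (simp add: add.commute)
          show "\<pi> (Suc k + n) \<in> mvZ (\<pi> (k + n))" using pi inZ[of "Suc k + n"] unfolding play_in_def mvZ_def by simp
          assume "own (\<pi> (k + n)) = pp"
          moreover have "\<pi> (k + n) \<notin> S" "\<pi> (k + n) \<in> R - D" using stay[of k] unfolding S_def by (auto simp: add.commute)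
          ultimately show "\<pi> (Suc k + n) = fA (\<pi> (k + n))" using pi unfolding play_in_def F_def by auto
        qed
        then show False using plR by blast
      qed
      have inS: "\<pi> (k + N) \<in> S" for k using noR[of "k + N"] inZ unfolding S_def by simp
      have "play_in own mvS pp fS (\<Union>i\<in>K. fst i) (\<lambda>k. \<pi> (k + N))"
        unfolding play_in_def
      proof (intro conjI allI impI)
        fix k
        show "\<pi> (k + N) \<in> (\<Union>i\<in>K. fst i)" using inS SK by blast
        show "\<pi> (Suc k + N) \<in> mvS (\<pi> (k + N))" using pi inS[of "Suc k"] unfolding play_in_def mvS_def by simp
        assume "own (\<pi> (k + N)) = pp"
        then show "\<pi> (Suc k + N) = fS (\<pi> (k + N))" using pi inS[of k] unfolding play_in_def F_def by simp
      qed
      then have "wins prS pp (\<lambda>k. \<pi> (k + N))" using fS(2) by blast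
      moreover have "\<forall>i. prS (\<pi> (i + N)) = pr (\<pi> (i + N))" using inS unfolding prS_def by simp
      ultimately have "wins pr pp (\<lambda>k. \<pi> (k + N))" using wins_cong[of prS "\<lambda>k. \<pi> (k + N)" pr] by simp
      then show ?thesis using tailw by blast
    qed
    have Zwin: "pwin own mv pr pp F x" if "x \<in> Z" for x
      unfolding pwin_def using that gF pF by blast
    have Ywin: "pwin own mv pr oo gY x" if "x \<in> Y" for x
      unfolding pwin_def using that gY by blast
    show "(\<exists>f. pwin own mv pr True f q) \<or> (\<exists>g. pwin own mv pr False g q)"
    proof (cases "q \<in> Y")
      case True
      then show ?thesis using Ywin[of q] unfolding oo_def by (cases pp) auto
    next
      case False
      then have "q \<in> Z" unfolding Z_def by blast
      then show ?thesis using Zwin[of q] by (cases pp) auto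
    qed
  qed
qed

lemma path_ok_snoc:
  "path_ok mv (h @ [x]) \<longleftrightarrow> path_ok mv h \<and> (h \<noteq> [] \<longrightarrow> x \<in> mv (last h))"
proof
  assume a: "path_ok mv (h @ [x])"
  have "path_ok mv h" unfolding path_ok_def
  proof (intro allI impI)
    fix i assume "Suc i < length h"
    then show "h ! Suc i \<in> mv (h ! i)" using a[unfolded path_ok_def, rule_format, of i]
      by (simp add: nth_append)
  qed
  moreover have "h \<noteq> [] \<longrightarrow> x \<in> mv (last h)"
  proof
    assume "h \<noteq> []"
    then have "Suc (length h - 1) < length (h @ [x])" by simp
    from a[unfolded path_ok_def, rule_format, OF this] \<open>h \<noteq> []\<close>
    show "x \<in> mv (last h)" by (simp add: nth_append last_conv_nth)
  qed
  ultimately show "path_ok mv h \<and> (h \<noteq> [] \<longrightarrow> x \<in> mv (last h))" by blast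
next
  assume a: "path_ok mv h \<and> (h \<noteq> [] \<longrightarrow> x \<in> mv (last h))"
  show "path_ok mv (h @ [x])" unfolding path_ok_def
  proof (intro allI impI)
    fix i assume i: "Suc i < length (h @ [x])"
    show "(h @ [x]) ! Suc i \<in> mv ((h @ [x]) ! i)"
    proof (cases "Suc i < length h")
      case True
      then show ?thesis using a unfolding path_ok_def by (simp add: nth_append)
    next
      case False
      then have e: "i = length h - 1" "h \<noteq> []" using i by auto
      then show ?thesis using a by (simp add: nth_append last_conv_nth)
    qed
  qed
qed

lemma consistent_fin_snoc:
  "consistent_fin own \<sigma> (h @ [x]) \<longleftrightarrow>
     consistent_fin own \<sigma> h \<and> (h \<noteq> [] \<longrightarrow> own (last h) \<longrightarrow> x = \<sigma> h)"
proof
  assume a: "consistent_fin own \<sigma> (h @ [x])"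
  have "consistent_fin own \<sigma> h" unfolding consistent_fin_def
  proof (intro allI impI)
    fix i assume "Suc i < length h" "own (h ! i)"
    then show "h ! Suc i = \<sigma> (take (Suc i) h)" using a[unfolded consistent_fin_def, rule_format, of i]
      by (simp add: nth_append)
  qed
  moreover have "h \<noteq> [] \<longrightarrow> own (last h) \<longrightarrow> x = \<sigma> h"
  proof (intro impI)
    assume "h \<noteq> []" "own (last h)"
    then have "Suc (length h - 1) < length (h @ [x])" "own ((h @ [x]) ! (length h - 1))"
      by (simp_all add: nth_append last_conv_nth)
    from a[unfolded consistent_fin_def, rule_format, OF this] \<open>h \<noteq> []\<close>
    show "x = \<sigma> h" by (simp add: nth_append)
  qed
  ultimately show "consistent_fin own \<sigma> h \<and> (h \<noteq> [] \<longrightarrow> own (last h) \<longrightarrow> x = \<sigma> h)" by blast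
next
  assume a: "consistent_fin own \<sigma> h \<and> (h \<noteq> [] \<longrightarrow> own (last h) \<longrightarrow> x = \<sigma> h)"
  show "consistent_fin own \<sigma> (h @ [x])" unfolding consistent_fin_def
  proof (intro allI impI)
    fix i assume i: "Suc i < length (h @ [x])" and o: "own ((h @ [x]) ! i)"
    show "(h @ [x]) ! Suc i = \<sigma> (take (Suc i) (h @ [x]))"
    proof (cases "Suc i < length h")
      case True
      then show ?thesis using a o unfolding consistent_fin_def by (simp add: nth_append)
    next
      case False
      then have e: "Suc i = length h" using i by simp
      then have "h \<noteq> []" by auto
      have e2: "i = length h - 1" using e by simp
      have "own (last h)" using o e2 \<open>h \<noteq> []\<close> by (simp add: nth_append last_conv_nth)
      then show ?thesis using a e e2 \<open>h \<noteq> []\<close> by (simp add: nth_append)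
    qed
  qed
qed

lemma pwin_imp_Ewins:
  assumes pw: "pwin own mv pr True f q"
    and W: "\<And>\<pi>. \<pi> 0 = q \<Longrightarrow> (\<forall>i. \<pi> (Suc i) \<in> mv (\<pi> i)) \<Longrightarrow> wins pr True \<pi> \<Longrightarrow> W \<pi>"
  shows "E_wins own mv W q"
proof -
  have "\<exists>X. q \<in> X \<and> good own mv True {} X f \<and> (\<forall>\<pi>. play_in own mv True f X \<pi> \<longrightarrow> wins pr True \<pi>)"
    using pw unfolding pwin_def .
  then obtain X where X: "q \<in> X" "good own mv True {} X f" "\<forall>\<pi>. play_in own mv True f X \<pi> \<longrightarrow> wins pr True \<pi>"
    by blast
  define \<sigma> where "\<sigma> h = f (last h)" for h :: "'a list"
  have inX: "set h \<subseteq> X" if "h \<noteq> []" "hd h = q" "path_ok mv h" "consistent_fin own \<sigma> h" for h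
    using that
  proof (induction h rule: rev_induct)
    case Nil then show ?case by simp
  next
    case (snoc x h)
    show ?case
    proof (cases "h = []")
      case True then show ?thesis using snoc X(1) by simp
    next
      case False
      have ph0: "path_ok mv h \<and> x \<in> mv (last h)" using snoc(4) False by (simp add: path_ok_snoc)
      then have ph: "path_ok mv h" "x \<in> mv (last h)" by simp_all
      have ch0: "consistent_fin own \<sigma> h \<and> (own (last h) \<longrightarrow> x = \<sigma> h)"
        using snoc(5) False by (simp add: consistent_fin_snoc)
      then have ch: "consistent_fin own \<sigma> h" "own (last h) \<longrightarrow> x = \<sigma> h" by simp_all
      have IH: "set h \<subseteq> X" using snoc(1) False snoc(3) ph(1) ch(1) by simp
      then have lX: "last h \<in> X" using False by (meson last_in_set subsetD)
      have "x \<in> X"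
      proof (cases "own (last h)")
        case True
        then have "x = f (last h)" using ch(2) unfolding \<sigma>_def by simp
        then show ?thesis using X(2) lX True unfolding good_def by auto
      next
        case False
        then show ?thesis using X(2) lX ph(2) unfolding good_def by auto
      qed
      then show ?thesis using IH by simp
    qed
  qed
  have part1: "(own (last h) \<and> mv (last h) \<noteq> {} \<longrightarrow> \<sigma> h \<in> mv (last h)) \<and>
          (mv (last h) = {} \<longrightarrow> \<not> own (last h))"
    if h: "h \<noteq> [] \<and> hd h = q \<and> path_ok mv h \<and> consistent_fin own \<sigma> h" for h
  proof -
    have "set h \<subseteq> X" using h inX[of h] by blast
    then have lX: "last h \<in> X" using h by (meson last_in_set subsetD)
    show ?thesis using X(2) lX unfolding good_def \<sigma>_def by auto
  qed
  have part2: "W \<pi>" if a: "\<pi> 0 = q \<and> (\<forall>i. \<pi> (Suc i) \<in> mv (\<pi> i)) \<and> consistent_inf own \<sigma> \<pi>" for \<pi>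
  proof -
    have st: "own (\<pi> i) \<Longrightarrow> \<pi> (Suc i) = f (\<pi> i)" for i
      using a unfolding consistent_inf_def \<sigma>_def by simp
    have pX: "\<pi> n \<in> X" for n
    proof (induction n)
      case 0 then show ?case using a X(1) by simp
    next
      case (Suc n)
      show ?case
      proof (cases "own (\<pi> n)")
        case True then show ?thesis using st[of n] X(2) Suc unfolding good_def by auto
      next
        case False then show ?thesis using a X(2) Suc unfolding good_def by auto
      qed
    qed
    have "play_in own mv True f X \<pi>" unfolding play_in_def using pX a st by simp
    then have "wins pr True \<pi>" using X(3) by blast
    then show "W \<pi>" using a by (intro W) auto
  qed
  have "E_winning_strategy own mv W \<sigma> q"
    unfolding E_winning_strategy_def using part1 part2 by blast
  then show ?thesis unfolding E_wins_def by blast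
qed

lemma Ewins_pwin_False:
  assumes ew: "E_wins own mv W q" and pw: "pwin own mv pr False g q"
    and W: "\<And>\<pi>. \<pi> 0 = q \<Longrightarrow> (\<forall>i. \<pi> (Suc i) \<in> mv (\<pi> i)) \<Longrightarrow> W \<pi> \<Longrightarrow> wins pr True \<pi>"
  shows False
proof -
  obtain \<sigma> where \<sigma>: "E_winning_strategy own mv W \<sigma> q" using ew unfolding E_wins_def by blast
  have "\<exists>X. q \<in> X \<and> good own mv False {} X g \<and> (\<forall>\<pi>. play_in own mv False g X \<pi> \<longrightarrow> wins pr False \<pi>)"
    using pw unfolding pwin_def .
  then obtain X where X: "q \<in> X" "good own mv False {} X g" "\<forall>\<pi>. play_in own mv False g X \<pi> \<longrightarrow> wins pr False \<pi>"
    by blast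
  define nxt where "nxt h = (if own (last h) then \<sigma> h else g (last h))" for h
  define hist where "hist = rec_nat [q] (\<lambda>n h. h @ [nxt h])"
  have h0: "hist 0 = [q]" and hS: "hist (Suc n) = hist n @ [nxt (hist n)]" for n
    unfolding hist_def by simp_all
  have len: "length (hist n) = Suc n" for n by (induction n) (simp_all add: h0 hS)
  have hne: "hist n \<noteq> []" for n using len[of n] by auto
  have hd: "hd (hist n) = q" for n by (induction n) (simp_all add: h0 hS hne)
  define \<pi> where "\<pi> n = last (hist n)" for n
  have pref: "hist (n + k) ! i = hist n ! i" if "i \<le> n" for n k i
    using that by (induction k) (simp_all add: hS nth_append len)
  have pin: "hist n ! i = \<pi> i" if "i \<le> n" for n i
  proof -
    have "hist n ! i = hist (i + (n - i)) ! i" using that by simp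
    also have "... = hist i ! i" using pref by blast
    also have "... = \<pi> i" unfolding \<pi>_def using len[of i] hne[of i] by (simp add: last_conv_nth)
    finally show ?thesis .
  qed
  have mapeq: "map \<pi> [0..<Suc n] = hist n" for n
  proof (rule nth_equalityI)
    show "length (map \<pi> [0..<Suc n]) = length (hist n)" using len by simp
    fix i assume "i < length (map \<pi> [0..<Suc n])"
    then have "i \<le> n" by simp
    then show "map \<pi> [0..<Suc n] ! i = hist n ! i" using pin[of i n]
      by (simp del: upt_Suc add: nth_map)
  qed
  have valid: "path_ok mv (hist n) \<and> consistent_fin own \<sigma> (hist n) \<and> set (hist n) \<subseteq> X" for n
  proof (induction n)
    case 0 then show ?case using X(1) by (simp add: h0 path_ok_def consistent_fin_def)
  next
    case (Suc n)
    let ?h = "hist n"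
    have lX: "last ?h \<in> X" using Suc hne[of n] by auto
    have vh: "?h \<noteq> [] \<and> hd ?h = q \<and> path_ok mv ?h \<and> consistent_fin own \<sigma> ?h" using Suc hne hd by blast
    have mv: "nxt ?h \<in> mv (last ?h) \<and> nxt ?h \<in> X"
    proof (cases "own (last ?h)")
      case True
      then have "mv (last ?h) \<noteq> {}" using \<sigma> vh unfolding E_winning_strategy_def by blast
      then have "\<sigma> ?h \<in> mv (last ?h)" using \<sigma> vh True unfolding E_winning_strategy_def by blast
      moreover have "mv (last ?h) \<subseteq> X" using X(2) lX True unfolding good_def by auto
      ultimately show ?thesis using True unfolding nxt_def by auto
    next
      case False
      then show ?thesis using X(2) lX unfolding good_def nxt_def by auto
    qed
    show ?case unfolding hS using Suc mv hne[of n]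
      by (simp add: path_ok_snoc consistent_fin_snoc nxt_def)
  qed
  have step: "\<pi> (Suc n) = nxt (hist n)" for n unfolding \<pi>_def by (simp add: hS)
  have lastn: "last (hist n) = \<pi> n" for n unfolding \<pi>_def by simp
  have moves: "\<pi> (Suc n) \<in> mv (\<pi> n)" for n
    using valid[of "Suc n"] hne[of n] unfolding hS path_ok_snoc step lastn by (simp add: lastn)
  have pX: "\<pi> n \<in> X" for n using valid[of n] hne[of n] unfolding \<pi>_def by auto
  have ci: "consistent_inf own \<sigma> \<pi>" unfolding consistent_inf_def
  proof (intro allI impI)
    fix i assume "own (\<pi> i)"
    then show "\<pi> (Suc i) = \<sigma> (map \<pi> [0..<Suc i])" using step[of i] mapeq[of i] lastn[of i]
      unfolding nxt_def by simp
  qed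
  have p0: "\<pi> 0 = q" unfolding \<pi>_def by (simp add: h0)
  have "W \<pi>" using \<sigma> p0 moves ci unfolding E_winning_strategy_def by blast
  then have wT: "wins pr True \<pi>" using p0 moves by (intro W) auto
  have "play_in own mv False g X \<pi>" unfolding play_in_def
  proof (intro conjI allI impI)
    fix n
    show "\<pi> n \<in> X" by (rule pX)
    show "\<pi> (Suc n) \<in> mv (\<pi> n)" by (rule moves)
    assume "own (\<pi> n) = False"
    then show "\<pi> (Suc n) = g (\<pi> n)" using step[of n] lastn[of n] unfolding nxt_def by simp
  qed
  then have "wins pr False \<pi>" using X(3) by blast
  then show False using wT unfolding wins_def by simp
qed

definition segT :: "(nat \<Rightarrow> 'a list) \<Rightarrow> nat \<Rightarrow> nat" where
  "segT seg i = (\<Sum>j<i. length (seg j))"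

definition flat :: "'a \<Rightarrow> (nat \<Rightarrow> 'a list) \<Rightarrow> nat \<Rightarrow> 'a" where
  "flat x0 seg n = (if n = 0 then x0 else
     seg (LEAST i. n \<le> segT seg (Suc i)) ! (n - 1 - segT seg (LEAST i. n \<le> segT seg (Suc i))))"

lemma segT_Suc: "segT seg (Suc i) = segT seg i + length (seg i)"
  unfolding segT_def by simp

lemma segT_mono:
  assumes "\<forall>i. seg i \<noteq> []" "i \<le> i'"
  shows "segT seg i + (i' - i) \<le> segT seg i'"
  using assms(2)
proof (induction i' rule: dec_induct)
  case base then show ?case by simp
next
  case (step k)
  have "length (seg k) \<ge> 1" using assms(1) by (simp add: Suc_le_eq)
  then show ?case using step by (simp add: segT_Suc Suc_diff_le)
qed

lemma segT_ge: "\<forall>i. seg i \<noteq> [] \<Longrightarrow> i \<le> segT seg i"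
  using segT_mono[of seg 0 i] by (simp add: segT_def)

lemma flat_at:
  assumes ne: "\<forall>i. seg i \<noteq> []" and j: "j < length (seg i)"
  shows "flat x0 seg (segT seg i + j + 1) = seg i ! j"
proof -
  let ?n = "segT seg i + j + 1"
  have L: "(LEAST i'. ?n \<le> segT seg (Suc i')) = i"
  proof (rule Least_equality)
    show "?n \<le> segT seg (Suc i)" using j by (simp add: segT_Suc)
    fix y assume y: "?n \<le> segT seg (Suc y)"
    show "i \<le> y"
    proof (rule ccontr)
      assume "\<not> i \<le> y"
      then have "Suc y \<le> i" by simp
      then have "segT seg (Suc y) \<le> segT seg i" using segT_mono[OF ne, of "Suc y" i] by simp
      then show False using y by simp
    qed
  qed
  show ?thesis unfolding flat_def L by simp
qed

lemma flat_cover: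
  assumes ne: "\<forall>i. seg i \<noteq> []" and n: "n \<ge> 1"
  shows "\<exists>i j. j < length (seg i) \<and> n = segT seg i + j + 1"
proof -
  have ex: "\<exists>i. n \<le> segT seg (Suc i)"
    using segT_ge[OF ne, of n] by (intro exI[of _ n]) (simp add: segT_Suc)
  define i where "i = (LEAST i. n \<le> segT seg (Suc i))"
  have i1: "n \<le> segT seg (Suc i)" unfolding i_def using LeastI_ex[OF ex] .
  have i2: "segT seg i < n"
  proof (cases i)
    case 0 then show ?thesis using n by (simp add: segT_def)
  next
    case (Suc i')
    have "\<not> n \<le> segT seg (Suc i')" using not_less_Least[of i' "\<lambda>i. n \<le> segT seg (Suc i)"] Suc
      unfolding i_def by simp
    then show ?thesis using Suc by simp
  qed
  show ?thesis
    using i1 i2 by (intro exI[of _ i] exI[of _ "n - 1 - segT seg i"]) (auto simp: segT_Suc)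
qed

definition pchain :: "('a \<Rightarrow> 'a \<Rightarrow> bool) \<Rightarrow> 'a list \<Rightarrow> bool" where
  "pchain P l \<longleftrightarrow> (\<forall>j. Suc j < length l \<longrightarrow> P (l ! j) (l ! Suc j))"

lemma flat_chain:
  assumes ne: "\<forall>i. seg i \<noteq> []"
    and ch: "\<forall>i. pchain P ((if i = 0 then x0 else last (seg (i - 1))) # seg i)"
  shows "P (flat x0 seg n) (flat x0 seg (Suc n))"
proof -
  obtain i j where ij: "j < length (seg i)" "Suc n = segT seg i + j + 1"
    using flat_cover[OF ne, of "Suc n"] by auto
  let ?st = "if i = 0 then x0 else last (seg (i - 1))"
  have c: "P ((?st # seg i) ! j) ((?st # seg i) ! Suc j)"
    using ch ij(1) unfolding pchain_def by auto
  have b: "flat x0 seg (Suc n) = (?st # seg i) ! Suc j"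
    using flat_at[OF ne ij(1), of x0] ij(2) by simp
  have a: "flat x0 seg n = (?st # seg i) ! j"
  proof (cases j)
    case 0
    then have nT: "n = segT seg i" using ij by simp
    show ?thesis
    proof (cases i)
      case 0 then show ?thesis using nT \<open>j = 0\<close> by (simp add: segT_def flat_def)
    next
      case (Suc i')
      have l: "length (seg i') - 1 < length (seg i')" using ne by (simp add: Suc_le_eq)
      have "n = segT seg i' + (length (seg i') - 1) + 1"
        using nT Suc ne[rule_format, of i'] by (simp add: segT_Suc)
      then have "flat x0 seg n = seg i' ! (length (seg i') - 1)"
        using flat_at[OF ne l, of x0] by simp
      also have "... = last (seg i')" using ne by (simp add: last_conv_nth)
      finally show ?thesis using Suc \<open>j = 0\<close> by simp
    qed
  next
    case (Suc j')
    then have "n = segT seg i + j' + 1" "j' < length (seg i)" using ij by auto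
    then show ?thesis using flat_at[OF ne, of j' i x0] Suc by simp
  qed
  show ?thesis using a b c by simp
qed

lemma flat_LS:
  fixes pr :: "'a \<Rightarrow> nat"
  assumes ne: "\<forall>i. seg i \<noteq> []" and bd: "\<forall>x. pr x \<le> d"
  shows "LS (\<lambda>n. pr (flat x0 seg n)) = LS (\<lambda>i. Max (pr ` set (seg i)))"
proof -
  let ?ks = "\<lambda>i. Max (pr ` set (seg i))"
  have kbd: "\<forall>i. ?ks i \<le> d" using bd ne by (simp add: Max_le_iff)
  let ?K = "LS ?ks"
  obtain io N where io: "inf_often (\<lambda>i. ?ks i = ?K)" and N: "\<forall>i\<ge>N. ?ks i \<le> ?K"
    using LS_char[OF kbd] by blast
  show ?thesis
  proof (rule LS_unique[of _ d])
    show "\<forall>i. pr (flat x0 seg i) \<le> d" using bd by simp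
    show "inf_often (\<lambda>n. pr (flat x0 seg n) = ?K)" unfolding inf_often_def
    proof
      fix m
      obtain i where i: "i > m" "?ks i = ?K" using io unfolding inf_often_def by blast
      have "?ks i \<in> pr ` set (seg i)" using ne by simp
      then obtain j where j: "j < length (seg i)" "pr (seg i ! j) = ?K"
        using i(2) by (auto simp: in_set_conv_nth)
      have "segT seg i + j + 1 > m" using segT_ge[OF ne, of i] i(1) by simp
      then show "\<exists>n>m. pr (flat x0 seg n) = ?K" using flat_at[OF ne j(1), of x0] j(2) by metis
    qed
    show "\<exists>M. \<forall>n\<ge>M. pr (flat x0 seg n) \<le> ?K"
    proof (intro exI[of _ "segT seg N + 1"] allI impI)
      fix n assume n: "segT seg N + 1 \<le> n"
      obtain i j where ij: "j < length (seg i)" "n = segT seg i + j + 1"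
        using flat_cover[OF ne, of n] n by auto
      have "i \<ge> N"
      proof (rule ccontr)
        assume "\<not> N \<le> i"
        then have "Suc i \<le> N" by simp
        then have "segT seg (Suc i) \<le> segT seg N" using segT_mono[OF ne, of "Suc i" N] by simp
        then show False using ij n by (simp add: segT_Suc)
      qed
      have "pr (seg i ! j) \<le> ?ks i" using ij(1) by simp
      then show "pr (flat x0 seg n) \<le> ?K" using flat_at[OF ne ij(1), of x0] ij(2) N \<open>i \<ge> N\<close> by auto
    qed
  qed
qed

definition pstep :: "('q \<Rightarrow> bool) \<Rightarrow> ('q \<Rightarrow> 'q set) \<Rightarrow> bool \<Rightarrow> ('q \<Rightarrow> 'q) \<Rightarrow> 'q set \<Rightarrow> ('q \<Rightarrow> bool) \<Rightarrow> 'q \<Rightarrow> 'q \<Rightarrow> bool" where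
  "pstep own mv p f X Ok a b \<longleftrightarrow> b \<in> mv a \<and> (own a = p \<longrightarrow> b = f a) \<and> a \<in> X \<and> b \<in> X \<and> Ok a \<and> Ok b"

lemma pstep_play:
  assumes "\<forall>n. pstep own mv p f X Ok (\<rho> n) (\<rho> (Suc n))"
  shows "play_in own mv p f X \<rho>"
  using assms unfolding pstep_def play_in_def by auto

lemma chain_snoc: "pchain P (l @ [x]) \<longleftrightarrow> pchain P l \<and> (l \<noteq> [] \<longrightarrow> P (last l) x)"
proof
  assume a: "pchain P (l @ [x])"
  have "pchain P l" unfolding pchain_def
  proof (intro allI impI)
    fix j assume "Suc j < length l"
    then show "P (l ! j) (l ! Suc j)" using a[unfolded pchain_def, rule_format, of j] by (simp add: nth_append)
  qed
  moreover have "l \<noteq> [] \<longrightarrow> P (last l) x"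
  proof
    assume "l \<noteq> []"
    then have "Suc (length l - 1) < length (l @ [x])" by simp
    from a[unfolded pchain_def, rule_format, OF this] \<open>l \<noteq> []\<close>
    show "P (last l) x" by (simp add: nth_append last_conv_nth)
  qed
  ultimately show "pchain P l \<and> (l \<noteq> [] \<longrightarrow> P (last l) x)" by blast
next
  assume a: "pchain P l \<and> (l \<noteq> [] \<longrightarrow> P (last l) x)"
  show "pchain P (l @ [x])" unfolding pchain_def
  proof (intro allI impI)
    fix j assume j: "Suc j < length (l @ [x])"
    show "P ((l @ [x]) ! j) ((l @ [x]) ! Suc j)"
    proof (cases "Suc j < length l")
      case True
      then show ?thesis using a unfolding pchain_def by (simp add: nth_append)
    next
      case False
      then have e: "j = length l - 1" "l \<noteq> []" using j by auto
      then show ?thesis using a by (simp add: nth_append last_conv_nth)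
    qed
  qed
qed

lemma chain_map: "pchain P (map h l) \<longleftrightarrow> pchain (\<lambda>a b. P (h a) (h b)) l"
  unfolding pchain_def by auto

lemma chain_Cons: "pchain P (a # l) \<longleftrightarrow> (l \<noteq> [] \<longrightarrow> P a (hd l)) \<and> pchain P l"
  unfolding pchain_def
  apply (cases l)
   apply simp
  apply (auto simp: nth_Cons split: nat.splits)
  done

lemma chain_lift:
  assumes "pchain Q l" "l \<noteq> []" "A (hd l)" "\<And>a b. Q a b \<Longrightarrow> A a \<Longrightarrow> R a b \<and> A b"
  shows "pchain R l \<and> (\<forall>y\<in>set l. A y)"
proof -
  have AA: "A (l ! j)" if "j < length l" for j
    using that
  proof (induction j)
    case 0 then show ?case using assms(2,3) by (simp add: hd_conv_nth)
  next
    case (Suc j)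
    then have "Q (l ! j) (l ! Suc j)" using assms(1) unfolding pchain_def by simp
    then show ?case using Suc assms(4) by simp
  qed
  have "pchain R l" unfolding pchain_def
  proof (intro allI impI)
    fix j assume "Suc j < length l"
    then show "R (l ! j) (l ! Suc j)" using assms(1,4) AA[of j] unfolding pchain_def by simp
  qed
  moreover have "\<forall>y\<in>set l. A y" using AA by (auto simp: in_set_conv_nth)
  ultimately show ?thesis by blast
qed

lemma chain_last_prop:
  assumes "pchain P l" "length l \<ge> 2" "\<And>a b. P a b \<Longrightarrow> B b"
  shows "B (last l)"
proof -
  have "Suc (length l - 2) < length l" using assms(2) by simp
  then have "P (l ! (length l - 2)) (l ! Suc (length l - 2))" using assms(1) unfolding pchain_def by blast
  then have "B (l ! Suc (length l - 2))" using assms(3) by blast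
  moreover have "Suc (length l - 2) = length l - 1" using assms(2) by simp
  moreover have "l \<noteq> []" using assms(2) by auto
  ultimately show ?thesis by (simp add: last_conv_nth)
qed

lemma chain_tl_prop:
  assumes "pchain P l" "y \<in> set (tl l)" "\<And>a b. P a b \<Longrightarrow> B b"
  shows "B y"
proof -
  obtain j where j: "j < length (tl l)" "y = tl l ! j" using assms(2) by (auto simp: in_set_conv_nth)
  then have "Suc j < length l" by simp
  then have "P (l ! j) (l ! Suc j)" using assms(1) unfolding pchain_def by blast
  moreover have "l ! Suc j = y" using j by (cases l) auto
  ultimately show ?thesis using assms(3) by blast
qed

locale pfc =
  fixes G :: "('v, 'p) pformula"
  assumes pf: "parity_formula G"
    and noeps: "\<forall>v \<in> pV G. pL G v \<noteq> LEps"
    and nonempty: "\<forall>v \<in> pV G. pL G v \<in> {LAnd, LOr} \<longrightarrow> succs G v \<noteq> {}"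
begin

lemma finV: "finite (pV G)" and vI: "pvI G \<in> pV G" and Esub: "pE G \<subseteq> pV G \<times> pV G"
  using pf unfolding parity_formula_def by auto

lemma succs_pV: "u \<in> succs G v \<Longrightarrow> u \<in> pV G \<and> v \<in> pV G"
  using Esub unfolding succs_def by auto

lemma modal_unique: "v \<in> pV G \<Longrightarrow> pL G v \<in> {LDia, LBox} \<Longrightarrow> u \<in> succs G v \<Longrightarrow> u' \<in> succs G v \<Longrightarrow> u = u'"
  using pf unfolding parity_formula_def by blast

lemma modal_ex: "v \<in> pV G \<Longrightarrow> pL G v \<in> {LDia, LBox} \<Longrightarrow> \<exists>u. u \<in> succs G v"
  using pf unfolding parity_formula_def by blast

definition prE :: "'v \<times> 's \<Rightarrow> nat" where
  "prE q = (if fst q \<in> pV G then pOm G (fst q) else 0)"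

definition dmax :: nat where "dmax = Max (pOm G ` pV G)"

lemma prE_bd: "prE q \<le> dmax"
  unfolding prE_def dmax_def using finV by auto

lemma pOm_bd: "v \<in> pV G \<Longrightarrow> pOm G v \<le> dmax"
  unfolding dmax_def using finV by auto

lemma seg_parity:
  fixes seg :: "nat \<Rightarrow> ('v \<times> 's) list"
  assumes X: "\<forall>\<pi>. play_in own mv p f X \<pi> \<longrightarrow> wins prE p \<pi>"
    and ne: "\<forall>i. seg i \<noteq> []"
    and ch: "\<forall>i. pchain (pstep own mv p f X (\<lambda>q. fst q \<in> pV G)) ((if i = 0 then x0 else last (seg (i - 1))) # seg i)"
  shows "even (LS (\<lambda>i. Max (pOm G ` fst ` set (seg i)))) = p"
proof -
  define \<rho> where "\<rho> = flat x0 seg"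
  have "\<forall>n. pstep own mv p f X (\<lambda>q. fst q \<in> pV G) (\<rho> n) (\<rho> (Suc n))"
    unfolding \<rho>_def using flat_chain[OF ne ch] by blast
  then have "play_in own mv p f X \<rho>" by (rule pstep_play)
  then have w: "even (LS (\<lambda>n. prE (\<rho> n))) = p" using X unfolding wins_def by blast
  have "LS (\<lambda>n. prE (\<rho> n)) = LS (\<lambda>i. Max (prE ` set (seg i)))"
    unfolding \<rho>_def using flat_LS[OF ne, of prE dmax x0] prE_bd by blast
  moreover have "prE ` set (seg i) = pOm G ` fst ` set (seg i)" for i
  proof -
    have "fst y \<in> pV G" if "y \<in> set (seg i)" for y
    proof -
      have "y \<in> set (tl ((if i = 0 then x0 else last (seg (i - 1))) # seg i))" using that by simp
      from chain_tl_prop[OF ch[rule_format, of i] this, of "\<lambda>q. fst q \<in> pV G"]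
      show ?thesis unfolding pstep_def by blast
    qed
    then show ?thesis unfolding prE_def by force
  qed
  ultimately show ?thesis using w by simp
qed

lemma SP_struct:
  assumes ls: "local_strategy G \<chi>" and sp: "\<pi> \<in> SP G \<chi> v"
  shows "2 \<le> length \<pi> \<and> hd \<pi> = v \<and> set \<pi> \<subseteq> pV G \<and>
    pchain (\<lambda>a b. a \<in> Vlab G LOr \<union> Vlab G LAnd \<and> b \<in> succs G a \<and> (a \<in> Vlab G LOr \<longrightarrow> b = \<chi> a)) \<pi>"
  using sp
proof (induction rule: SP.induct)
  case sp_or
  then have "\<chi> v \<in> succs G v" using ls unfolding local_strategy_def by blast
  then show ?case using sp_or succs_pV[of "\<chi> v" v] unfolding pchain_def by (auto simp: Vlab_def)
next
  case (sp_and w)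
  then show ?case using succs_pV[of w v] unfolding pchain_def by (auto simp: Vlab_def)
next
  case (sp_or_step \<pi>)
  then have "\<chi> (last \<pi>) \<in> succs G (last \<pi>)" using ls unfolding local_strategy_def by blast
  moreover have "\<pi> \<noteq> []" using sp_or_step by auto
  ultimately show ?case using sp_or_step succs_pV[of "\<chi> (last \<pi>)" "last \<pi>"]
    by (auto simp: chain_snoc)
next
  case (sp_and_step \<pi> w)
  moreover have "\<pi> \<noteq> []" using sp_and_step by auto
  ultimately show ?case using succs_pV[of w "last \<pi>"] by (auto simp: chain_snoc Vlab_def)
qed

lemma Om_path_pV:
  assumes "local_strategy G \<chi>" "\<pi> \<in> SP G \<chi> v"
  shows "Om_path G \<pi> \<in> pOm G ` pV G"
proof -
  have s: "2 \<le> length \<pi>" "set \<pi> \<subseteq> pV G" using SP_struct[OF assms] by auto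
  then have ne: "set (tl \<pi>) \<noteq> {}" by (cases \<pi>) auto
  have "set (tl \<pi>) \<subseteq> pV G" using s by (cases \<pi>) auto
  moreover have "Max (pOm G ` set (tl \<pi>)) \<in> pOm G ` set (tl \<pi>)" using ne by (intro Max_in) auto
  ultimately show ?thesis unfolding Om_path_def by blast
qed

lemma e_chi_sub:
  assumes "local_strategy G \<chi>" "(v, k, w) \<in> e_chi G \<chi>"
  shows "v \<in> pV G \<and> w \<in> pV G \<and> (k = 0 \<or> k \<in> pOm G ` pV G)"
  using assms(2)
proof (unfold e_chi_def e_minus_def Delta_def, elim UnE)
  assume "(v, k, w) \<in> {(u, 0, u) |u. u \<in> pV G}"
  then show ?thesis by auto
next
  assume "(v, k, w) \<in> {(v, Om_path G \<pi>, last \<pi>) |v \<pi>. v \<in> Vlab G LOr \<union> Vlab G LAnd \<and> \<pi> \<in> SP G \<chi> v}"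
  then obtain \<pi> where p: "v \<in> Vlab G LOr \<union> Vlab G LAnd" "\<pi> \<in> SP G \<chi> v" "k = Om_path G \<pi>" "w = last \<pi>"
    by blast
  have s: "2 \<le> length \<pi>" "set \<pi> \<subseteq> pV G" using SP_struct[OF assms(1) p(2)] by auto
  then have "w \<in> pV G" using p(4) by (metis last_in_set list.size(3) not_numeral_le_zero subsetD)
  then show ?thesis using p Om_path_pV[OF assms(1) p(2)] by (auto simp: Vlab_def)
qed

lemma comp_macro:
  assumes "local_strategy G \<chi>" "d \<subseteq> pV G \<times> pOm G ` pV G \<times> pV G"
  shows "e_chi G \<chi> ;; d \<in> macrostates G"
  unfolding macrostates_def mcomp_def
proof (intro PowI subsetI)
  fix z assume "z \<in> {(v, k, v'') |v k v''. \<exists>k' k'' v'. (v, k', v') \<in> e_chi G \<chi> \<and> (v', k'', v'') \<in> d \<and> k = max k' k''}"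
  then obtain v k v'' k' k'' v' where z: "z = (v, k, v'')" "(v, k', v') \<in> e_chi G \<chi>" "(v', k'', v'') \<in> d" "k = max k' k''"
    by blast
  have a: "v \<in> pV G" "k' = 0 \<or> k' \<in> pOm G ` pV G" using e_chi_sub[OF assms(1) z(2)] by auto
  have b: "v'' \<in> pV G" "k'' \<in> pOm G ` pV G" using z(3) assms(2) by auto
  have "k \<in> pOm G ` pV G" using a(2) b(2) z(4) by (cases "k' \<le> k''") (auto simp: max_def)
  then show "z \<in> pV G \<times> pOm G ` pV G \<times> pV G" using z(1) a(1) b(1) by auto
qed

lemma d_box_sub: "d_box G M \<subseteq> pV G \<times> pOm G ` pV G \<times> pV G"
  unfolding d_box_def Vlab_def using succs_pV by blast

lemma d_dia_sub: "x \<in> pV G \<Longrightarrow> d_dia G x M \<subseteq> pV G \<times> pOm G ` pV G \<times> pV G"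
  unfolding d_dia_def using d_box_sub succs_pV by blast

end

context pfc
begin

lemma em_or: "pL G v = LOr \<Longrightarrow> eval_moves G R (v, s) = {(u, s) |u. (v, u) \<in> pE G}" by simp
lemma em_and: "pL G v = LAnd \<Longrightarrow> eval_moves G R (v, s) = {(u, s) |u. (v, u) \<in> pE G}" by simp
lemma em_dia: "pL G v = LDia \<Longrightarrow> eval_moves G R (v, s) = {(u, t) |u t. (v, u) \<in> pE G \<and> (s, t) \<in> R}" by simp
lemma em_box: "pL G v = LBox \<Longrightarrow> eval_moves G R (v, s) = {(u, t) |u t. (v, u) \<in> pE G \<and> (s, t) \<in> R}" by simp

lemma Ran_comp: "w \<in> Ran_m (m ;; e) \<Longrightarrow> \<exists>u k v k'. (u, k, v) \<in> m \<and> (v, k', w) \<in> e"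
  unfolding Ran_m_def mcomp_def by blast

lemma comp_mem: "(v, k, w) \<in> m ;; e \<Longrightarrow> \<exists>k' y k''. (v, k', y) \<in> m \<and> (y, k'', w) \<in> e \<and> k = max k' k''"
  unfolding mcomp_def by blast

lemma e_minus_mem:
  "(v, k, w) \<in> e_minus G \<chi> \<Longrightarrow> \<exists>\<pi>. v \<in> Vlab G LOr \<union> Vlab G LAnd \<and> \<pi> \<in> SP G \<chi> v \<and> k = Om_path G \<pi> \<and> w = last \<pi>"
  unfolding e_minus_def by blast

lemma Delta_mem: "(v, k, w) \<in> Delta U \<Longrightarrow> v = w \<and> k = 0 \<and> v \<in> U"
  unfolding Delta_def by blast

lemma Max_snoc:
  assumes "l \<noteq> []"
  shows "Max (pOm G ` set (l @ [w])) = max (Max (pOm G ` set l)) (pOm G w)"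
proof -
  have "pOm G ` set (l @ [w]) = insert (pOm G w) (pOm G ` set l)" by auto
  then show ?thesis using assms by (simp add: Max_insert max.commute)
qed

end

locale dir1 = pfc G for G :: "('v, 'p) pformula" +
  fixes R :: "'s rel" and Val :: "'s \<Rightarrow> 'p set" and f :: "'v \<times> 's \<Rightarrow> 'v \<times> 's"
    and X :: "('v \<times> 's) set" and s0 :: 's
  assumes gd: "good (eval_owner G Val) (eval_moves G R) True {} X f"
    and wn: "\<forall>\<pi>. play_in (eval_owner G Val) (eval_moves G R) True f X \<pi> \<longrightarrow> wins prE True \<pi>"
    and st: "(pvI G, s0) \<in> X"
begin

abbreviation "fs \<equiv> pstep (eval_owner G Val) (eval_moves G R) True f X (\<lambda>q. fst q \<in> pV G)"

lemma good_at: "q \<in> X \<Longrightarrow> (eval_owner G Val q \<longrightarrow> f q \<in> eval_moves G R q \<and> f q \<in> X) \<and>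
   (\<not> eval_owner G Val q \<longrightarrow> eval_moves G R q \<subseteq> X)"
  using gd unfolding good_def by auto

definition chi :: "'s \<Rightarrow> 'v \<Rightarrow> 'v" where
  "chi s v = (if (v, s) \<in> X then fst (f (v, s)) else (SOME u. u \<in> succs G v))"

lemma chi_or:
  assumes "v \<in> Vlab G LOr" "(v, s) \<in> X"
  shows "f (v, s) = (chi s v, s) \<and> chi s v \<in> succs G v \<and> (chi s v, s) \<in> X"
proof -
  have l: "pL G v = LOr" using assms(1) by (simp add: Vlab_def)
  then have o: "eval_owner G Val (v, s)" by simp
  then have "f (v, s) \<in> eval_moves G R (v, s) \<and> f (v, s) \<in> X" using good_at[OF assms(2)] by blast
  then obtain u where u: "f (v, s) = (u, s)" "(v, u) \<in> pE G" "(u, s) \<in> X" using l by auto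
  then have "chi s v = u" unfolding chi_def using assms(2) by simp
  then show ?thesis using u by (simp add: succs_def)
qed

lemma chi_ls: "local_strategy G (chi s)"
  unfolding local_strategy_def
proof
  fix v assume v: "v \<in> Vlab G LOr"
  show "chi s v \<in> succs G v"
  proof (cases "(v, s) \<in> X")
    case True then show ?thesis using chi_or[OF v] by blast
  next
    case False
    have "v \<in> pV G" "pL G v = LOr" using v by (auto simp: Vlab_def)
    then have "succs G v \<noteq> {}" using nonempty by auto
    then have "(SOME u. u \<in> succs G v) \<in> succs G v" by (meson ex_in_conv someI_ex)
    then show ?thesis using False unfolding chi_def by simp
  qed
qed

lemma fstep_loc:
  assumes "a \<in> Vlab G LOr \<union> Vlab G LAnd" "b \<in> succs G a" "a \<in> Vlab G LOr \<longrightarrow> b = chi s a" "(a, s) \<in> X"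
  shows "fs (a, s) (b, s) \<and> (b, s) \<in> X"
proof -
  have pv: "a \<in> pV G" "b \<in> pV G" using assms(2) succs_pV by auto
  show ?thesis
  proof (cases "a \<in> Vlab G LOr")
    case True
    then have l: "pL G a = LOr" by (simp add: Vlab_def)
    have c: "f (a, s) = (b, s)" "(b, s) \<in> X" using chi_or[OF True assms(4)] assms(3) True by auto
    have "(b, s) \<in> eval_moves G R (a, s)" using l assms(2) by (simp add: succs_def)
    then show ?thesis unfolding pstep_def using c pv assms(4) by simp
  next
    case False
    then have l: "pL G a = LAnd" using assms(1) by (auto simp: Vlab_def)
    have m: "(b, s) \<in> eval_moves G R (a, s)" using l assms(2) by (simp add: succs_def)
    have o: "\<not> eval_owner G Val (a, s)" using l by simp
    then have "(b, s) \<in> X" using good_at[OF assms(4)] m by blast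
    then show ?thesis unfolding pstep_def using m o pv assms(4) by simp
  qed
qed

lemma SP_fchain:
  assumes "(v, s) \<in> X" "\<pi> \<in> SP G (chi s) v"
  shows "pchain fs (map (\<lambda>y. (y, s)) \<pi>) \<and> (\<forall>y\<in>set \<pi>. (y, s) \<in> X)"
proof -
  have S: "2 \<le> length \<pi> \<and> hd \<pi> = v \<and> set \<pi> \<subseteq> pV G \<and>
    pchain (\<lambda>a b. a \<in> Vlab G LOr \<union> Vlab G LAnd \<and> b \<in> succs G a \<and> (a \<in> Vlab G LOr \<longrightarrow> b = chi s a)) \<pi>"
    using SP_struct[OF chi_ls assms(2)] .
  have ne: "\<pi> \<noteq> []" using S by auto
  have "pchain (\<lambda>a b. fs (a, s) (b, s)) \<pi> \<and> (\<forall>y\<in>set \<pi>. (y, s) \<in> X)"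
  proof (rule chain_lift)
    show "pchain (\<lambda>a b. a \<in> Vlab G LOr \<union> Vlab G LAnd \<and> b \<in> succs G a \<and> (a \<in> Vlab G LOr \<longrightarrow> b = chi s a)) \<pi>"
      using S by blast
    show "\<pi> \<noteq> []" by (rule ne)
    show "(hd \<pi>, s) \<in> X" using S assms(1) by simp
    fix a b assume "a \<in> Vlab G LOr \<union> Vlab G LAnd \<and> b \<in> succs G a \<and> (a \<in> Vlab G LOr \<longrightarrow> b = chi s a)" "(a, s) \<in> X"
    then show "fs (a, s) (b, s) \<and> (b, s) \<in> X" by (intro fstep_loc) auto
  qed
  then show ?thesis by (simp add: chain_map)
qed

lemma e_reach:
  assumes "(v, s) \<in> X" "v \<in> pV G" "(v, k, w) \<in> e_chi G (chi s)"
  shows "(w, s) \<in> X \<and> w \<in> pV G"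
proof -
  have "w \<in> pV G" using e_chi_sub[OF chi_ls assms(3)] by blast
  moreover have "(w, s) \<in> X"
  proof (cases "(v, k, w) \<in> Delta (pV G)")
    case True then show ?thesis using Delta_mem[OF True] assms(1) by simp
  next
    case False
    then have em: "(v, k, w) \<in> e_minus G (chi s)" using assms(3) unfolding e_chi_def by blast
    obtain \<pi> where p: "\<pi> \<in> SP G (chi s) v" "w = last \<pi>" using e_minus_mem[OF em] by blast
    have "\<pi> \<noteq> []" using SP_struct[OF chi_ls p(1)] by auto
    then show ?thesis using SP_fchain[OF assms(1) p(1)] p(2) by simp
  qed
  ultimately show ?thesis by blast
qed

definition Mm :: "'v macro \<Rightarrow> 's \<Rightarrow> 'v macro" where
  "Mm m s = m ;; e_chi G (chi s)"

definition Inv :: "'v macro \<Rightarrow> 's \<Rightarrow> bool" where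
  "Inv m s \<longleftrightarrow> (\<forall>v\<in>Ran_m m. (v, s) \<in> X \<and> v \<in> pV G)"

lemma RanM:
  assumes "Inv m s" "w \<in> Ran_m (Mm m s)"
  shows "(w, s) \<in> X \<and> w \<in> pV G"
proof -
  obtain u k v k' where "(u, k, v) \<in> m" "(v, k', w) \<in> e_chi G (chi s)"
    using Ran_comp[OF assms(2)[unfolded Mm_def]] by blast
  moreover then have "v \<in> Ran_m m" unfolding Ran_m_def by blast
  ultimately show ?thesis using assms(1) e_reach[of v s k' w] unfolding Inv_def by blast
qed

lemma compat:
  assumes "Inv m s"
  shows "compatible G (Ran_m (Mm m s)) (Val s)"
  unfolding compatible_def
proof
  fix u assume u: "u \<in> Ran_m (Mm m s)"
  then have uX: "(u, s) \<in> X" using RanM[OF assms] by blast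
  have nostuck: False if "eval_owner G Val (u, s)" "eval_moves G R (u, s) = {}"
    using good_at[OF uX] that by blast
  show "pL G u \<noteq> LBot \<and> (\<forall>p. pL G u = LLit p \<longrightarrow> p \<in> Val s) \<and> (\<forall>p. pL G u = LNLit p \<longrightarrow> p \<notin> Val s)"
  proof (intro conjI allI impI)
    show "pL G u \<noteq> LBot" using nostuck by auto
  next
    fix p assume l: "pL G u = LLit p"
    show "p \<in> Val s" by (rule ccontr) (use nostuck l in simp)
  next
    fix p assume l: "pL G u = LNLit p"
    show "p \<notin> Val s" by (rule ccontr) (use nostuck l in simp)
  qed
qed

end

context dir1
begin

lemma locNBT:
  assumes inv: "Inv m s"
  shows "NBT (\<lambda>i. if i = 0 then m else e_minus G (chi s))"
  unfolding NBT_def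
proof
  assume "\<exists>vs ks. bad_trace (\<lambda>i. if i = 0 then m else e_minus G (chi s)) vs ks"
  then obtain vs ks where bad: "bad_trace (\<lambda>i. if i = 0 then m else e_minus G (chi s)) vs ks" by blast
  have tr: "(vs i, ks i, vs (Suc i)) \<in> (if i = 0 then m else e_minus G (chi s))" for i
    using bad unfolding bad_trace_def by blast
  have odd: "odd (LS ks)" using bad unfolding bad_trace_def LS_def by blast
  have v1: "(vs 1, s) \<in> X \<and> vs 1 \<in> pV G"
  proof -
    have "vs 1 \<in> Ran_m m" using tr[of 0] unfolding Ran_m_def by auto
    then show ?thesis using inv unfolding Inv_def by blast
  qed
  have em: "\<exists>\<pi>. \<pi> \<in> SP G (chi s) (vs i) \<and> ks i = Om_path G \<pi> \<and> vs (Suc i) = last \<pi>" if "i \<ge> 1" for i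
    using tr[of i] that e_minus_mem[of "vs i" "ks i" "vs (Suc i)" "chi s"] by auto
  define P where "P i = (SOME \<pi>. \<pi> \<in> SP G (chi s) (vs i) \<and> ks i = Om_path G \<pi> \<and> vs (Suc i) = last \<pi>)" for i
  have P: "P i \<in> SP G (chi s) (vs i) \<and> ks i = Om_path G (P i) \<and> vs (Suc i) = last (P i)" if "i \<ge> 1" for i
    unfolding P_def using someI_ex[OF em[OF that]] .
  have Ps: "2 \<le> length (P i) \<and> hd (P i) = vs i \<and> set (P i) \<subseteq> pV G" if "i \<ge> 1" for i
  proof -
    have "P i \<in> SP G (chi s) (vs i)" using P[OF that] by blast
    from SP_struct[OF chi_ls this] show ?thesis by blast
  qed
  have reach: "(vs i, s) \<in> X \<and> vs i \<in> pV G" if "i \<ge> 1" for i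
    using that
  proof (induction i rule: dec_induct)
    case base then show ?case using v1 by simp
  next
    case (step i)
    have "P i \<noteq> []" using Ps[OF step(1)] by auto
    then have "last (P i) \<in> set (P i)" by simp
    then show ?case using SP_fchain[of "vs i" s "P i"] step P[OF step(1)] Ps[OF step(1)] by auto
  qed
  define seg where "seg i = map (\<lambda>y. (y, s)) (tl (P (Suc i)))" for i
  define x0 where "x0 = (vs 1, s)"
  have tlne: "tl (P (Suc i)) \<noteq> []" for i using Ps[of "Suc i"] by (cases "P (Suc i)") auto
  have ne: "\<forall>i. seg i \<noteq> []" unfolding seg_def using tlne by simp
  have stt: "(if i = 0 then x0 else last (seg (i - 1))) = (vs (Suc i), s)" for i
  proof (cases i)
    case 0 then show ?thesis by (simp add: x0_def)
  next
    case (Suc j)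
    have "last (seg (i - 1)) = (last (tl (P (Suc j))), s)" unfolding seg_def using Suc tlne[of j] by (simp add: last_map)
    also have "last (tl (P (Suc j))) = last (P (Suc j))" using tlne[of j] by (cases "P (Suc j)") auto
    also have "... = vs (Suc i)" using P[of "Suc j"] Suc by simp
    finally show ?thesis using Suc by simp
  qed
  have ch: "\<forall>i. pchain fs ((if i = 0 then x0 else last (seg (i - 1))) # seg i)"
  proof
    fix i
    have "(vs (Suc i), s) # seg i = map (\<lambda>y. (y, s)) (P (Suc i))"
      unfolding seg_def using Ps[of "Suc i"] by (cases "P (Suc i)") auto
    moreover have "pchain fs (map (\<lambda>y. (y, s)) (P (Suc i)))"
      using SP_fchain[of "vs (Suc i)" s "P (Suc i)"] reach[of "Suc i"] P[of "Suc i"] by auto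
    ultimately show "pchain fs ((if i = 0 then x0 else last (seg (i - 1))) # seg i)" using stt by simp
  qed
  have ev: "even (LS (\<lambda>i. Max (pOm G ` fst ` set (seg i))))"
    using seg_parity[OF wn ne ch] by simp
  have eqk: "(\<lambda>i. Max (pOm G ` fst ` set (seg i))) = (\<lambda>i. ks (i + 1))"
  proof
    fix i
    have "fst ` set (seg i) = set (tl (P (Suc i)))" unfolding seg_def by (simp add: image_image)
    then show "Max (pOm G ` fst ` set (seg i)) = ks (i + 1)" using P[of "Suc i"] unfolding Om_path_def by simp
  qed
  have kb: "ks i \<le> max dmax (ks 0)" for i
  proof (cases i)
    case 0 then show ?thesis by simp
  next
    case (Suc j)
    then have "ks i \<in> pOm G ` pV G" using P[of i] Om_path_pV[OF chi_ls] by auto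
    then have "ks i \<le> dmax" using pOm_bd by auto
    then show ?thesis by simp
  qed
  have "LS (\<lambda>i. ks (i + 1)) = LS ks" using LS_shift[of ks "max dmax (ks 0)" 1] kb by blast
  then show False using ev eqk odd by simp
qed

definition Ub :: "'v macro \<Rightarrow> 's \<Rightarrow> 'v macro \<Rightarrow> 's set" where
  "Ub m s b = {t. (s, t) \<in> R \<and>
     (b = e_chi G (chi s) ;; d_box G (Mm m s) \<or>
      (\<exists>x\<in>Ran_m (Mm m s) \<inter> Vlab G LDia. b = e_chi G (chi s) ;; d_dia G x (Mm m s) \<and> t = snd (f (x, s))))}"

lemma dia_move:
  assumes "x \<in> Vlab G LDia" "(x, s) \<in> X"
  shows "\<exists>u. f (x, s) = (u, snd (f (x, s))) \<and> u \<in> succs G x \<and> (s, snd (f (x, s))) \<in> R \<and> f (x, s) \<in> X"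
proof -
  have l: "pL G x = LDia" using assms(1) by (simp add: Vlab_def)
  then have o: "eval_owner G Val (x, s)" by simp
  then have "f (x, s) \<in> eval_moves G R (x, s) \<and> f (x, s) \<in> X" using good_at[OF assms(2)] by blast
  then show ?thesis using l by (auto simp: succs_def)
qed

lemma Ub_form:
  assumes inv: "Inv m s" and t: "t \<in> Ub m s b"
  shows "\<exists>d. b = e_chi G (chi s) ;; d \<and> (\<forall>y k w. (y, k, w) \<in> d \<longrightarrow> k = pOm G w \<and> fs (y, s) (w, t))"
proof -
  have R: "(s, t) \<in> R" using t unfolding Ub_def by blast
  have boxstep: "k = pOm G w \<and> fs (y, s) (w, t)" if "(y, k, w) \<in> d_box G (Mm m s)" for y k w
  proof -
    have y: "y \<in> Ran_m (Mm m s)" "y \<in> Vlab G LBox" "w \<in> succs G y" "k = pOm G w"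
      using that unfolding d_box_def by auto
    have yX: "(y, s) \<in> X" "y \<in> pV G" using RanM[OF inv y(1)] by auto
    have l: "pL G y = LBox" using y(2) by (simp add: Vlab_def)
    have m: "(w, t) \<in> eval_moves G R (y, s)" using l y(3) R by (simp add: succs_def)
    have o: "\<not> eval_owner G Val (y, s)" using l by simp
    have "(w, t) \<in> X" using good_at[OF yX(1)] o m by blast
    then show ?thesis unfolding pstep_def using m o yX y(3,4) succs_pV by auto
  qed
  show ?thesis
  proof (cases "b = e_chi G (chi s) ;; d_box G (Mm m s)")
    case True
    then show ?thesis using boxstep by blast
  next
    case False
    then obtain x where x: "x \<in> Ran_m (Mm m s)" "x \<in> Vlab G LDia"
      "b = e_chi G (chi s) ;; d_dia G x (Mm m s)" "t = snd (f (x, s))"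
      using t unfolding Ub_def by blast
    have xX: "(x, s) \<in> X" "x \<in> pV G" using RanM[OF inv x(1)] by auto
    obtain u where u: "f (x, s) = (u, t)" "u \<in> succs G x" "f (x, s) \<in> X"
      using dia_move[OF x(2) xX(1)] x(4) by auto
    have l: "pL G x = LDia" using x(2) by (simp add: Vlab_def)
    have diastep: "k = pOm G w \<and> fs (x, s) (w, t)" if "w \<in> succs G x" "k = pOm G w" for w k
    proof -
      have "w = u" using modal_unique[OF xX(2) _ that(1) u(2)] l by simp
      moreover have "(u, t) \<in> eval_moves G R (x, s)" using l u(2) R by (simp add: succs_def)
      moreover have "eval_owner G Val (x, s)" using l by simp
      ultimately show ?thesis unfolding pstep_def using u xX that succs_pV by auto
    qed
    have "\<forall>y k w. (y, k, w) \<in> d_dia G x (Mm m s) \<longrightarrow> k = pOm G w \<and> fs (y, s) (w, t)"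
      unfolding d_dia_def using boxstep diastep by blast
    then show ?thesis using x(3) by blast
  qed
qed

lemma inv_pres:
  assumes "Inv m s" "t \<in> Ub m s b"
  shows "Inv b t"
  unfolding Inv_def
proof
  fix w assume "w \<in> Ran_m b"
  then obtain v k where vkw: "(v, k, w) \<in> b" unfolding Ran_m_def by blast
  obtain d where d: "b = e_chi G (chi s) ;; d" "\<forall>y k w. (y, k, w) \<in> d \<longrightarrow> k = pOm G w \<and> fs (y, s) (w, t)"
    using Ub_form[OF assms] by blast
  have vkw': "(v, k, w) \<in> e_chi G (chi s) ;; d" using vkw d(1) by simp
  obtain y k'' where "(y, k'', w) \<in> d" using comp_mem[OF vkw'] by blast
  then have "fs (y, s) (w, t)" using d(2) by blast
  then show "(w, t) \<in> X \<and> w \<in> pV G" unfolding pstep_def by simp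
qed

lemma seg_decomp:
  assumes inv: "Inv m s" and t: "t \<in> Ub m s b" and vkw: "(v, k, w) \<in> b" and v: "(v, s) \<in> X" "v \<in> pV G"
  shows "\<exists>P. P \<noteq> [] \<and> hd P = v \<and> pchain fs (map (\<lambda>y. (y, s)) P @ [(w, t)]) \<and>
     k = Max (pOm G ` set (tl P @ [w])) \<and> set P \<subseteq> pV G \<and> w \<in> pV G"
proof -
  obtain d where d: "b = e_chi G (chi s) ;; d" "\<forall>y k w. (y, k, w) \<in> d \<longrightarrow> k = pOm G w \<and> fs (y, s) (w, t)"
    using Ub_form[OF inv t] by blast
  obtain k' y k'' where ky: "(v, k', y) \<in> e_chi G (chi s)" "(y, k'', w) \<in> d" "k = max k' k''"
    using comp_mem[OF vkw[unfolded d(1)]] by blast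
  have ms: "k'' = pOm G w" "fs (y, s) (w, t)" using d(2) ky(2) by auto
  have wV: "w \<in> pV G" using ms(2) unfolding pstep_def by simp
  show ?thesis
  proof (cases "(v, k', y) \<in> Delta (pV G)")
    case True
    then have e: "y = v" "k' = 0" using Delta_mem[OF True] by auto
    have "pchain fs (map (\<lambda>y. (y, s)) [v] @ [(w, t)])" using ms(2) e unfolding pchain_def by simp
    moreover have "k = Max (pOm G ` set (tl [v] @ [w]))" using ky(3) e ms(1) by simp
    ultimately show ?thesis using v wV by (intro exI[of _ "[v]"]) auto
  next
    case False
    then have em: "(v, k', y) \<in> e_minus G (chi s)" using ky(1) unfolding e_chi_def by blast
    obtain \<pi> where p: "\<pi> \<in> SP G (chi s) v" "k' = Om_path G \<pi>" "y = last \<pi>" using e_minus_mem[OF em] by blast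
    have S: "2 \<le> length \<pi>" "hd \<pi> = v" "set \<pi> \<subseteq> pV G" using SP_struct[OF chi_ls p(1)] by auto
    have ne: "\<pi> \<noteq> []" using S by auto
    have tne: "tl \<pi> \<noteq> []" using S by (cases \<pi>) auto
    have c1: "pchain fs (map (\<lambda>y. (y, s)) \<pi>)" using SP_fchain[OF v(1) p(1)] by blast
    have "pchain fs (map (\<lambda>y. (y, s)) \<pi> @ [(w, t)])"
      using c1 ms(2) p(3) ne by (simp add: chain_snoc last_map)
    moreover have "k = Max (pOm G ` set (tl \<pi> @ [w]))"
      using ky(3) p(2) ms(1) Max_snoc[OF tne, of w] unfolding Om_path_def by simp
    ultimately show ?thesis using ne S wV by (intro exI[of _ \<pi>]) auto
  qed
qed

lemma legal:
  assumes inv: "Inv m s"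
  shows "AMark (Ub m s) \<in> acc_moves (aut_G G) R Val (ABasic m s)"
proof -
  let ?e = "e_chi G (chi s)"
  let ?M = "Mm m s"
  have a1: "\<forall>b. Ub m s b \<subseteq> R `` {s}" unfolding Ub_def by auto
  have a2: "\<forall>b. b \<notin> macrostates G \<longrightarrow> Ub m s b = {}"
  proof (intro allI impI)
    fix b assume nb: "b \<notin> macrostates G"
    show "Ub m s b = {}"
    proof (rule ccontr)
      assume "Ub m s b \<noteq> {}"
      then obtain t where "t \<in> Ub m s b" by blast
      then have "b = ?e ;; d_box G ?M \<or> (\<exists>x\<in>Ran_m ?M \<inter> Vlab G LDia. b = ?e ;; d_dia G x ?M)"
        unfolding Ub_def by blast
      then have "b \<in> macrostates G"
        using comp_macro[OF chi_ls d_box_sub] comp_macro[OF chi_ls d_dia_sub] by (auto simp: Vlab_def)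
      then show False using nb by blast
    qed
  qed
  define B where "B = (if R `` {s} = {} \<and> Ran_m ?M \<inter> Vlab G LDia = {} then {} else A_mchi G m (chi s))"
  have lc: "locally_compatible G (chi s) (Val s) m"
    unfolding locally_compatible_def using compat[OF inv] locNBT[OF inv] unfolding Mm_def by blast
  have Bth: "B \<in> theta G m (Val s) (chi s)"
  proof (cases "R `` {s} = {} \<and> Ran_m ?M \<inter> Vlab G LDia = {}")
    case True
    then have "B = {}" unfolding B_def by (rule if_P)
    moreover have "Ran_m (m ;; e_chi G (chi s)) \<inter> Vlab G LDia = {}" using True unfolding Mm_def by simp
    ultimately show ?thesis unfolding theta_def by simp
  next
    case False
    then have "B = A_mchi G m (chi s)" unfolding B_def by (rule if_not_P)
    then show ?thesis unfolding theta_def by simp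
  qed
  have BT: "B \<in> Theta_G G m (Val s)"
    unfolding Theta_G_def using Bth chi_ls lc by blast
  have ns: "nabla_sat (R `` {s}) (Ub m s) B"
  proof (cases "R `` {s} = {} \<and> Ran_m ?M \<inter> Vlab G LDia = {}")
    case True
    then have "B = {}" unfolding B_def by (rule if_P)
    then show ?thesis using True unfolding nabla_sat_def by simp
  next
    case False
    then have BA: "B = A_mchi G m (chi s)" unfolding B_def by (rule if_not_P)
    have Rne: "R `` {s} \<noteq> {}"
    proof
      assume e: "R `` {s} = {}"
      then obtain x where x: "x \<in> Ran_m ?M" "x \<in> Vlab G LDia" using False by blast
      have "(x, s) \<in> X" using RanM[OF inv x(1)] by blast
      then have "(s, snd (f (x, s))) \<in> R" using dia_move[OF x(2)] by blast
      then show False using e by blast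
    qed
    have c1: "\<forall>b\<in>B. \<exists>t\<in>R `` {s}. t \<in> Ub m s b"
    proof
      fix b assume "b \<in> B"
      then have "b = ?e ;; d_box G (m ;; ?e) \<or> (\<exists>x. b = ?e ;; d_dia G x (m ;; ?e) \<and> x \<in> Ran_m (m ;; ?e) \<inter> Vlab G LDia)"
        unfolding BA A_mchi_def by blast
      then show "\<exists>t\<in>R `` {s}. t \<in> Ub m s b"
      proof
        assume b: "b = ?e ;; d_box G (m ;; ?e)"
        obtain t where "t \<in> R `` {s}" using Rne by blast
        then show ?thesis using b unfolding Ub_def Mm_def by auto
      next
        assume "\<exists>x. b = ?e ;; d_dia G x (m ;; ?e) \<and> x \<in> Ran_m (m ;; ?e) \<inter> Vlab G LDia"
        then obtain x where x: "b = ?e ;; d_dia G x ?M" "x \<in> Ran_m ?M" "x \<in> Vlab G LDia"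
          unfolding Mm_def by blast
        have "(x, s) \<in> X" using RanM[OF inv x(2)] by blast
        then have r: "(s, snd (f (x, s))) \<in> R" using dia_move[OF x(3)] by blast
        then have "snd (f (x, s)) \<in> Ub m s b" unfolding Ub_def using x by blast
        then show ?thesis using r by blast
      qed
    qed
    have c2: "\<forall>t\<in>R `` {s}. \<exists>b\<in>B. t \<in> Ub m s b"
    proof
      fix t assume "t \<in> R `` {s}"
      moreover have "?e ;; d_box G ?M \<in> B" unfolding BA A_mchi_def Mm_def by blast
      ultimately show "\<exists>b\<in>B. t \<in> Ub m s b" unfolding Ub_def by auto
    qed
    show ?thesis unfolding nabla_sat_def using c1 c2 by blast
  qed
  show ?thesis
    unfolding acc_moves.simps aut_G_def
    using a1 a2 BT ns by auto
qed

end

context dir1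
begin

definition sigA :: "('v macro, 's) apos list \<Rightarrow> ('v macro, 's) apos" where
  "sigA h = (case last h of ABasic m s \<Rightarrow> AMark (Ub m s) | AMark U \<Rightarrow> AMark U)"

definition okpos :: "('v macro, 's) apos \<Rightarrow> bool" where
  "okpos p = (case p of ABasic m s \<Rightarrow> Inv m s | AMark U \<Rightarrow> (\<exists>m s. Inv m s \<and> U = Ub m s))"

lemma okstep:
  assumes "okpos p" "q \<in> acc_moves (aut_G G) R Val p" "acc_owner p \<longrightarrow> q = AMark (case p of ABasic m s \<Rightarrow> Ub m s)"
  shows "okpos q"
proof (cases p)
  case (ABasic m s)
  then show ?thesis using assms unfolding okpos_def by auto
next
  case (AMark U)
  then obtain m s where ms: "Inv m s" "U = Ub m s" using assms(1) unfolding okpos_def by auto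
  obtain b t where q: "q = ABasic b t" "t \<in> U b" using assms(2) AMark by auto
  then show ?thesis using inv_pres[OF ms(1)] ms(2) unfolding okpos_def by auto
qed

lemma inv0: "Inv (Delta {pvI G}) s0"
  unfolding Inv_def Ran_m_def Delta_def using st vI by auto

lemma dir1_main: "acc_E_wins (aut_G G) R Val (ABasic (Delta {pvI G}) s0)"
proof -
  let ?mv = "acc_moves (aut_G G) R Val"
  let ?q = "ABasic (Delta {pvI G}) s0 :: ('v macro, 's) apos"
  have hist: "okpos (last h)" if "h \<noteq> []" "hd h = ?q" "path_ok ?mv h" "consistent_fin acc_owner sigA h" for h
    using that
  proof (induction h rule: rev_induct)
    case Nil then show ?case by simp
  next
    case (snoc x h)
    show ?case
    proof (cases "h = []")
      case True then show ?thesis using snoc inv0 unfolding okpos_def by simp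
    next
      case False
      have ph: "path_ok ?mv h \<and> x \<in> ?mv (last h)" using snoc(4) False by (simp add: path_ok_snoc)
      have ch: "consistent_fin acc_owner sigA h \<and> (acc_owner (last h) \<longrightarrow> x = sigA h)"
        using snoc(5) False by (simp add: consistent_fin_snoc)
      have IH: "okpos (last h)" using snoc(1) False snoc(3) ph ch by simp
      have "acc_owner (last h) \<longrightarrow> x = AMark (case last h of ABasic m s \<Rightarrow> Ub m s)"
        using ch unfolding sigA_def by (cases "last h") auto
      then show ?thesis using okstep[OF IH] ph by simp
    qed
  qed
  have part1: "(acc_owner (last h) \<and> ?mv (last h) \<noteq> {} \<longrightarrow> sigA h \<in> ?mv (last h)) \<and>
      (?mv (last h) = {} \<longrightarrow> \<not> acc_owner (last h))"
    if h: "h \<noteq> [] \<and> hd h = ?q \<and> path_ok ?mv h \<and> consistent_fin acc_owner sigA h" for h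
  proof -
    have ok: "okpos (last h)" using hist h by blast
    show ?thesis
    proof (cases "last h")
      case (ABasic m s)
      then have "Inv m s" using ok unfolding okpos_def by simp
      then have "sigA h \<in> ?mv (last h)" using legal ABasic unfolding sigA_def by simp
      then show ?thesis by auto
    next
      case (AMark U) then show ?thesis by simp
    qed
  qed
  have part2: "acc_wincond (aut_G G) \<pi>"
    if a: "\<pi> 0 = ?q \<and> (\<forall>i. \<pi> (Suc i) \<in> ?mv (\<pi> i)) \<and> consistent_inf acc_owner sigA \<pi>" for \<pi>
  proof -
    have cons: "acc_owner (\<pi> i) \<Longrightarrow> \<pi> (Suc i) = sigA (map \<pi> [0..<Suc i])" for i
      using a unfolding consistent_inf_def by blast
    have lastmap: "last (map \<pi> [0..<Suc i]) = \<pi> i" for i by simp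
    have okall: "okpos (\<pi> n) \<and> (even n \<longleftrightarrow> (\<exists>m s. \<pi> n = ABasic m s))" for n
    proof (induction n)
      case 0 then show ?case using a inv0 unfolding okpos_def by simp
    next
      case (Suc n)
      have mvn: "\<pi> (Suc n) \<in> ?mv (\<pi> n)" using a by blast
      have own: "acc_owner (\<pi> n) \<longrightarrow> \<pi> (Suc n) = AMark (case \<pi> n of ABasic m s \<Rightarrow> Ub m s)"
        using cons[of n] lastmap[of n] unfolding sigA_def by (cases "\<pi> n") auto
      have "okpos (\<pi> (Suc n))" using okstep[OF _ mvn own] Suc by blast
      moreover have "even (Suc n) \<longleftrightarrow> (\<exists>m s. \<pi> (Suc n) = ABasic m s)"
      proof (cases "\<pi> n")
        case (ABasic m s)
        then show ?thesis using own Suc by auto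
      next
        case (AMark U)
        then show ?thesis using mvn Suc by auto
      qed
      ultimately show ?case by blast
    qed
    define ms where "ms i = apos_state (\<pi> (2 * i))" for i
    define ss where "ss i = (case \<pi> (2 * i) of ABasic m s \<Rightarrow> s)" for i
    have pb: "\<pi> (2 * i) = ABasic (ms i) (ss i) \<and> Inv (ms i) (ss i)" for i
    proof -
      obtain m s where "\<pi> (2 * i) = ABasic m s" using okall[of "2 * i"] by auto
      then show ?thesis using okall[of "2 * i"] unfolding ms_def ss_def okpos_def by simp
    qed
    have pm: "\<pi> (Suc (2 * i)) = AMark (Ub (ms i) (ss i))" for i
      using cons[of "2 * i"] lastmap[of "2 * i"] pb[of i] unfolding sigA_def by simp
    have tr: "ss (Suc i) \<in> Ub (ms i) (ss i) (ms (Suc i))" for i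
    proof -
      have "\<pi> (Suc (Suc (2 * i))) \<in> ?mv (\<pi> (Suc (2 * i)))" using a by blast
      moreover have "Suc (Suc (2 * i)) = 2 * Suc i" by simp
      ultimately have "ABasic (ms (Suc i)) (ss (Suc i)) \<in> ?mv (AMark (Ub (ms i) (ss i)))"
        using pb[of "Suc i"] pm[of i] by metis
      then show ?thesis by simp
    qed
    have m0: "ms 0 = Delta {pvI G}" "ss 0 = s0" using pb[of 0] a by auto
    have "NBT ms"
      unfolding NBT_def
    proof
      assume "\<exists>vs ks. bad_trace ms vs ks"
      then obtain vs ks where bad: "bad_trace ms vs ks" by blast
      have trc: "(vs i, ks i, vs (Suc i)) \<in> ms i" for i using bad unfolding bad_trace_def by blast
      have odd: "odd (LS ks)" using bad unfolding bad_trace_def LS_def by blast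
      have v1: "vs 1 = pvI G" "ks 0 = 0" using trc[of 0] m0 unfolding Delta_def by auto
      have reach: "(vs (Suc i), ss i) \<in> X \<and> vs (Suc i) \<in> pV G" for i
      proof -
        have "vs (Suc i) \<in> Ran_m (ms i)" using trc[of i] unfolding Ran_m_def by blast
        then show ?thesis using pb[of i] unfolding Inv_def by blast
      qed
      have dec: "\<exists>P. P \<noteq> [] \<and> hd P = vs (Suc i) \<and>
          pchain fs (map (\<lambda>y. (y, ss i)) P @ [(vs (Suc (Suc i)), ss (Suc i))]) \<and>
          ks (Suc i) = Max (pOm G ` set (tl P @ [vs (Suc (Suc i))])) \<and> set P \<subseteq> pV G \<and> vs (Suc (Suc i)) \<in> pV G" for i
        using seg_decomp[OF conjunct2[OF pb[of i]] tr[of i] trc[of "Suc i"]] reach[of i] by blast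
      define P where "P i = (SOME P. P \<noteq> [] \<and> hd P = vs (Suc i) \<and>
          pchain fs (map (\<lambda>y. (y, ss i)) P @ [(vs (Suc (Suc i)), ss (Suc i))]) \<and>
          ks (Suc i) = Max (pOm G ` set (tl P @ [vs (Suc (Suc i))])) \<and> set P \<subseteq> pV G \<and> vs (Suc (Suc i)) \<in> pV G)" for i
      have Pp: "P i \<noteq> [] \<and> hd (P i) = vs (Suc i) \<and>
          pchain fs (map (\<lambda>y. (y, ss i)) (P i) @ [(vs (Suc (Suc i)), ss (Suc i))]) \<and>
          ks (Suc i) = Max (pOm G ` set (tl (P i) @ [vs (Suc (Suc i))])) \<and> set (P i) \<subseteq> pV G \<and> vs (Suc (Suc i)) \<in> pV G" for i
        unfolding P_def using someI_ex[OF dec[of i]] .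
      define seg where "seg i = map (\<lambda>y. (y, ss i)) (tl (P i)) @ [(vs (Suc (Suc i)), ss (Suc i))]" for i
      define x0 where "x0 = (pvI G, s0)"
      have ne: "\<forall>i. seg i \<noteq> []" unfolding seg_def by simp
      have stt: "(if i = 0 then x0 else last (seg (i - 1))) = (vs (Suc i), ss i)" for i
        using v1 m0 unfolding x0_def seg_def by (cases i) auto
      have ch: "\<forall>i. pchain fs ((if i = 0 then x0 else last (seg (i - 1))) # seg i)"
      proof
        fix i
        have "(vs (Suc i), ss i) # seg i = map (\<lambda>y. (y, ss i)) (P i) @ [(vs (Suc (Suc i)), ss (Suc i))]"
          unfolding seg_def using Pp[of i] by (cases "P i") auto
        then show "pchain fs ((if i = 0 then x0 else last (seg (i - 1))) # seg i)"
          using stt Pp[of i] by simp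
      qed
      have ev: "even (LS (\<lambda>i. Max (pOm G ` fst ` set (seg i))))"
        using seg_parity[OF wn ne ch] by simp
      have eqk: "(\<lambda>i. Max (pOm G ` fst ` set (seg i))) = (\<lambda>i. ks (i + 1))"
      proof
        fix i
        have "fst ` set (seg i) = set (tl (P i) @ [vs (Suc (Suc i))])" unfolding seg_def by (auto simp: image_image)
        then show "Max (pOm G ` fst ` set (seg i)) = ks (i + 1)" using Pp[of i] by simp
      qed
      have kb: "ks i \<le> dmax" for i
      proof (cases i)
        case 0 then show ?thesis using v1 by simp
      next
        case (Suc j)
        have "set (tl (P j) @ [vs (Suc (Suc j))]) \<subseteq> pV G" using Pp[of j] by (cases "P j") auto
        moreover have "set (tl (P j) @ [vs (Suc (Suc j))]) \<noteq> {}" by simp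
        ultimately show ?thesis using Pp[of j] Suc pOm_bd finV
          by (simp add: Max_le_iff) blast
      qed
      have "LS (\<lambda>i. ks (i + 1)) = LS ks" using LS_shift[of ks dmax 1] kb by blast
      then show False using ev eqk odd by simp
    qed
    moreover have "(\<lambda>i. apos_state (\<pi> (2 * i))) = ms" unfolding ms_def by simp
    ultimately show ?thesis unfolding acc_wincond_def aut_G_def by simp
  qed
  have "E_winning_strategy acc_owner ?mv (acc_wincond (aut_G G)) sigA ?q"
    unfolding E_winning_strategy_def using part1 part2 by blast
  then show ?thesis unfolding acc_E_wins_def E_wins_def by blast
qed

end

lemma chain_upt: "pchain P (map f [0..<n]) \<Longrightarrow> Suc j < n \<Longrightarrow> P (f j) (f (Suc j))"
proof -
  assume c: "pchain P (map f [0..<n])" and j: "Suc j < n"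
  have "P (map f [0..<n] ! j) (map f [0..<n] ! Suc j)" using c j unfolding pchain_def by simp
  then show ?thesis using j by simp
qed

lemma map_upt_snoc: "map f [0..<Suc j] = map f [0..<j] @ [f j]"
  by simp

lemma chain_upt_snoc:
  assumes "pchain P (map f [0..<Suc j])" "P (f j) x"
  shows "pchain P (map f [0..<Suc j] @ [x])"
proof -
  have "last (map f [0..<Suc j]) = f j" by simp
  then show ?thesis using assms unfolding chain_snoc by simp
qed

locale dir2 = pfc G for G :: "('v, 'p) pformula" +
  fixes R :: "'s rel" and Val :: "'s \<Rightarrow> 'p set" and g :: "'v \<times> 's \<Rightarrow> 'v \<times> 's"
    and X :: "('v \<times> 's) set" and s0 :: 's
  assumes gd: "good (eval_owner G Val) (eval_moves G R) False {} X g"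
    and wn: "\<forall>\<pi>. play_in (eval_owner G Val) (eval_moves G R) False g X \<pi> \<longrightarrow> wins prE False \<pi>"
    and st: "(pvI G, s0) \<in> X"
begin

abbreviation "gs \<equiv> pstep (eval_owner G Val) (eval_moves G R) False g X (\<lambda>q. fst q \<in> pV G)"

lemma good_at: "q \<in> X \<Longrightarrow> (\<not> eval_owner G Val q \<longrightarrow> g q \<in> eval_moves G R q \<and> g q \<in> X) \<and>
   (eval_owner G Val q \<longrightarrow> eval_moves G R q \<subseteq> X)"
  using gd unfolding good_def by auto

lemma e_chi_Delta: "v \<in> pV G \<Longrightarrow> (v, 0, v) \<in> e_chi G \<chi>"
  unfolding e_chi_def Delta_def by blast

lemma comp_intro: "(v, k', y) \<in> m \<Longrightarrow> (y, k'', w) \<in> e \<Longrightarrow> (v, max k' k'', w) \<in> m ;; e"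
  unfolding mcomp_def by blast

lemma step2:
  assumes vX: "(v, s) \<in> X" and vV: "v \<in> pV G" and vR: "v \<in> Ran_m m"
    and mvU: "AMark U \<in> acc_moves (aut_G G) R Val (ABasic m s)"
  shows "\<exists>b t w k seg. ABasic b t \<in> acc_moves (aut_G G) R Val (AMark U) \<and> (v, k, w) \<in> b \<and>
     (w, t) \<in> X \<and> w \<in> pV G \<and> seg \<noteq> [] \<and> pchain gs ((v, s) # seg) \<and> last seg = (w, t) \<and>
     k = Max (pOm G ` fst ` set seg)"
proof -
  obtain B \<chi> where U1: "\<forall>b. U b \<subseteq> R `` {s}" and U2: "\<forall>b. b \<notin> macrostates G \<longrightarrow> U b = {}"
    and B: "B \<in> theta G m (Val s) \<chi>" "local_strategy G \<chi>" "locally_compatible G \<chi> (Val s) m"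
    and ns: "nabla_sat (R `` {s}) U B"
    using mvU unfolding Theta_G_def aut_G_def by auto
  let ?e = "e_chi G \<chi>"
  let ?M = "m ;; ?e"
  obtain u0 k0 where u0: "(u0, k0, v) \<in> m" using vR unfolding Ran_m_def by blast
  define nx where "nx a = (if a \<in> Vlab G LOr then \<chi> a else if a \<in> Vlab G LAnd then fst (g (a, s)) else a)" for a
  define w where "w = rec_nat v (\<lambda>n a. nx a)"
  have w0: "w 0 = v" and wS: "w (Suc j) = nx (w j)" for j unfolding w_def by simp_all
  have wl: "map w [0..<Suc (Suc j)] = map w [0..<Suc j] @ [w (Suc j)]" for j by simp
  have walk: "(w j, s) \<in> X \<and> w j \<in> pV G \<and> (j > 0 \<longrightarrow> map w [0..<Suc j] \<in> SP G \<chi> v) \<and>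
      pchain gs (map (\<lambda>i. (w i, s)) [0..<Suc j])"
    if "\<forall>i<j. w i \<in> Vlab G LOr \<union> Vlab G LAnd" for j
    using that
  proof (induction j)
    case 0 then show ?case using vX vV w0 unfolding pchain_def by simp
  next
    case (Suc j)
    then have IH: "(w j, s) \<in> X" "w j \<in> pV G" "j > 0 \<longrightarrow> map w [0..<Suc j] \<in> SP G \<chi> v"
        "pchain gs (map (\<lambda>i. (w i, s)) [0..<Suc j])" by auto
    have wj: "w j \<in> Vlab G LOr \<union> Vlab G LAnd" using Suc.prems by simp
    have nxt: "w (Suc j) \<in> succs G (w j) \<and> (w j \<in> Vlab G LOr \<longrightarrow> w (Suc j) = \<chi> (w j)) \<and>
        gs (w j, s) (w (Suc j), s)"
    proof (cases "w j \<in> Vlab G LOr")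
      case True
      then have l: "pL G (w j) = LOr" by (simp add: Vlab_def)
      have sc: "\<chi> (w j) \<in> succs G (w j)" using B(2) True unfolding local_strategy_def by blast
      have e: "w (Suc j) = \<chi> (w j)" using wS True unfolding nx_def by simp
      have m: "(w (Suc j), s) \<in> eval_moves G R (w j, s)" using sc e l by (simp add: succs_def)
      have o: "eval_owner G Val (w j, s)" using l by simp
      have "(w (Suc j), s) \<in> X" using good_at[OF IH(1)] o m by blast
      then show ?thesis using e sc m o IH(1,2) succs_pV[OF sc] unfolding pstep_def by auto
    next
      case False
      then have a: "w j \<in> Vlab G LAnd" using wj by blast
      then have l: "pL G (w j) = LAnd" by (simp add: Vlab_def)
      have o: "\<not> eval_owner G Val (w j, s)" using l by simp
      have gm: "g (w j, s) \<in> eval_moves G R (w j, s) \<and> g (w j, s) \<in> X" using good_at[OF IH(1)] o by blast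
      then obtain u where u: "g (w j, s) = (u, s)" "(w j, u) \<in> pE G" using l by auto
      have e: "w (Suc j) = u" using wS False a u unfolding nx_def by simp
      have sc: "u \<in> succs G (w j)" using u by (simp add: succs_def)
      show ?thesis using e sc gm u o IH(1,2) False succs_pV[OF sc] unfolding pstep_def by auto
    qed
    have sp: "map w [0..<Suc (Suc j)] \<in> SP G \<chi> v"
    proof (cases "j = 0")
      case True
      have "[v, w (Suc 0)] \<in> SP G \<chi> v"
      proof (cases "v \<in> Vlab G LOr")
        case True
        then have "w (Suc 0) = \<chi> v" using nxt \<open>j = 0\<close> w0 by simp
        then show ?thesis using SP.sp_or[OF True] by simp
      next
        case False
        then have a: "v \<in> Vlab G LAnd" using wj \<open>j = 0\<close> w0 by blast
        have "w (Suc 0) \<in> succs G v" using nxt \<open>j = 0\<close> w0 by simp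
        then show ?thesis by (rule SP.sp_and[OF a])
      qed
      then show ?thesis using True w0 by (simp add: upt_rec)
    next
      case False
      then have p: "map w [0..<Suc j] \<in> SP G \<chi> v" using IH(3) by simp
      have lst: "last (map w [0..<Suc j]) = w j" by simp
      show ?thesis
      proof (cases "w j \<in> Vlab G LOr")
        case True
        then show ?thesis using SP.sp_or_step[OF p] lst nxt wl by simp
      next
        case False
        then have "w j \<in> Vlab G LAnd" using wj by blast
        then show ?thesis using SP.sp_and_step[OF p] lst nxt wl by simp
      qed
    qed
    have "pchain gs (map (\<lambda>i. (w i, s)) [0..<Suc (Suc j)])"
      unfolding map_upt_snoc[of _ "Suc j"] using chain_upt_snoc[OF IH(4)] nxt by simp
    moreover have "(w (Suc j), s) \<in> X \<and> w (Suc j) \<in> pV G" using nxt unfolding pstep_def by simp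
    ultimately show ?case using sp by blast
  qed
  show ?thesis
  proof (cases "\<forall>j. w j \<in> Vlab G LOr \<union> Vlab G LAnd")
    case True
    have st1: "gs (w j, s) (w (Suc j), s)" for j
    proof -
      have "pchain gs (map (\<lambda>i. (w i, s)) [0..<Suc (Suc j)])" using walk[of "Suc j"] True by blast
      from chain_upt[OF this, of j] show ?thesis by simp
    qed
    have "play_in (eval_owner G Val) (eval_moves G R) False g X (\<lambda>j. (w j, s))"
      by (rule pstep_play) (use st1 in blast)
    then have "wins prE False (\<lambda>j. (w j, s))" using wn by blast
    moreover have "prE (w j, s) = pOm G (w j)" for j using walk[of j] True unfolding prE_def by auto
    ultimately have oddw: "odd (LS (\<lambda>j. pOm G (w j)))" unfolding wins_def by simp
    define vs where "vs i = (if i = 0 then u0 else w (i - 1))" for i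
    define ks where "ks i = (if i = 0 then k0 else pOm G (w i))" for i
    have inE: "(w j, pOm G (w (Suc j)), w (Suc j)) \<in> e_minus G \<chi>" for j
    proof -
      have wj: "w j \<in> Vlab G LOr \<union> Vlab G LAnd" using True by blast
      have sp: "[w j, w (Suc j)] \<in> SP G \<chi> (w j)"
      proof (cases "w j \<in> Vlab G LOr")
        case True
        then have "w (Suc j) = \<chi> (w j)" using wS unfolding nx_def by simp
        then show ?thesis using SP.sp_or[OF True] by simp
      next
        case False
        then have a: "w j \<in> Vlab G LAnd" using wj by blast
        have "gs (w j, s) (w (Suc j), s)" by (rule st1)
        then have "(w j, w (Suc j)) \<in> pE G" using a unfolding pstep_def by (auto simp: Vlab_def)
        then show ?thesis using SP.sp_and[OF a] by (simp add: succs_def)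
      qed
      have "Om_path G [w j, w (Suc j)] = pOm G (w (Suc j))" unfolding Om_path_def by simp
      then show ?thesis unfolding e_minus_def using wj sp
        by (smt (verit) last.simps list.distinct(1) mem_Collect_eq)
    qed
    have "bad_trace (\<lambda>i. if i = 0 then m else e_minus G \<chi>) vs ks"
      unfolding bad_trace_def
    proof
      show "\<forall>i. (vs i, ks i, vs (Suc i)) \<in> (if i = 0 then m else e_minus G \<chi>)"
      proof
        fix i show "(vs i, ks i, vs (Suc i)) \<in> (if i = 0 then m else e_minus G \<chi>)"
          using u0 w0 inE[of "i - 1"] unfolding vs_def ks_def by (cases i) auto
      qed
      have kb: "ks i \<le> max dmax k0" for i
        using pOm_bd[of "w i"] walk[of i] True unfolding ks_def by auto
      have "LS ks = LS (\<lambda>i. ks (i + 1))" using LS_shift[of ks "max dmax k0" 1] kb by simp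
      also have "... = LS (\<lambda>i. pOm G (w (i + 1)))" unfolding ks_def by simp
      also have "... = LS (\<lambda>j. pOm G (w j))" using LS_shift[of "\<lambda>j. pOm G (w j)" dmax 1] pOm_bd walk True by blast
      finally show "odd (Max {k. inf_often (\<lambda>i. ks i = k)})" using oddw unfolding LS_def by simp
    qed
    then have False using B(3) unfolding locally_compatible_def NBT_def by blast
    then show ?thesis by blast
  next
    case False
    define j where "j = (LEAST j. w j \<notin> Vlab G LOr \<union> Vlab G LAnd)"
    have jn: "w j \<notin> Vlab G LOr \<union> Vlab G LAnd" using False LeastI_ex[of "\<lambda>j. w j \<notin> Vlab G LOr \<union> Vlab G LAnd"] unfolding j_def by blast
    have jb: "\<forall>i<j. w i \<in> Vlab G LOr \<union> Vlab G LAnd" using not_less_Least unfolding j_def by blast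
    let ?y = "w j"
    have W: "(?y, s) \<in> X" "?y \<in> pV G" "j > 0 \<longrightarrow> map w [0..<Suc j] \<in> SP G \<chi> v"
        "pchain gs (map (\<lambda>i. (w i, s)) [0..<Suc j])" using walk[OF jb] by auto
    define k' where "k' = (if j = 0 then 0 else Max (pOm G ` set (map w [1..<Suc j])))"
    have ey: "(v, k', ?y) \<in> ?e"
    proof (cases "j = 0")
      case True then show ?thesis using e_chi_Delta[OF vV] w0 unfolding k'_def by simp
    next
      case False
      have sp: "map w [0..<Suc j] \<in> SP G \<chi> v" using W(3) False by simp
      have v0: "v \<in> Vlab G LOr \<union> Vlab G LAnd" using jb False w0 by auto
      have "tl (map w [0..<Suc j]) = map w [1..<Suc j]" by (simp add: upt_rec)
      then have "Om_path G (map w [0..<Suc j]) = k'" unfolding Om_path_def k'_def using False by simp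
      moreover have "last (map w [0..<Suc j]) = ?y" by simp
      ultimately have "(v, k', ?y) \<in> e_minus G \<chi>" unfolding e_minus_def using sp v0 by force
      then show ?thesis unfolding e_chi_def by blast
    qed
    have yM: "?y \<in> Ran_m ?M" using comp_intro[OF u0 ey] unfolding Ran_m_def by blast
    have lab: "pL G ?y \<noteq> LOr" "pL G ?y \<noteq> LAnd" "pL G ?y \<noteq> LEps"
      using jn W(2) noeps by (auto simp: Vlab_def)
    have cp: "compatible G (Ran_m ?M) (Val s)" using B(3) unfolding locally_compatible_def by blast
    have goal: "\<exists>b t w' k. ABasic b t \<in> acc_moves (aut_G G) R Val (AMark U) \<and> (v, k, w') \<in> b \<and>
        (w', t) \<in> X \<and> w' \<in> pV G \<and> gs (?y, s) (w', t) \<and> k = max k' (pOm G w')"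
    proof (cases "pL G ?y")
      case LDia
      have th: "theta G m (Val s) \<chi> = {A_mchi G m \<chi>}" using yM LDia W(2) unfolding theta_def by (auto simp: Vlab_def)
      then have BA: "B = A_mchi G m \<chi>" using B(1) by simp
      obtain w' where w': "w' \<in> succs G ?y" using modal_ex[OF W(2)] LDia by auto
      let ?b = "?e ;; d_dia G ?y ?M"
      have bB: "?b \<in> B" unfolding BA A_mchi_def using yM LDia W(2) by (auto simp: Vlab_def)
      then obtain t where t: "t \<in> R `` {s}" "t \<in> U ?b" using ns unfolding nabla_sat_def by blast
      have bS: "?b \<in> macrostates G" using U2 t(2) by blast
      have mv: "ABasic ?b t \<in> acc_moves (aut_G G) R Val (AMark U)" using bS t unfolding aut_G_def by simp
      have dd: "(?y, pOm G w', w') \<in> d_dia G ?y ?M" unfolding d_dia_def using w' by blast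
      have inb: "(v, max k' (pOm G w'), w') \<in> ?b" using comp_intro[OF ey dd] .
      have em: "(w', t) \<in> eval_moves G R (?y, s)" using LDia w' t(1) by (simp add: succs_def)
      have o: "eval_owner G Val (?y, s)" using LDia by simp
      have wX: "(w', t) \<in> X" using good_at[OF W(1)] o em by blast
      have "gs (?y, s) (w', t)" unfolding pstep_def using em o wX W(1,2) succs_pV[OF w'] by auto
      then show ?thesis using mv inb wX succs_pV[OF w'] by blast
    next
      case LBox
      have o: "\<not> eval_owner G Val (?y, s)" using LBox by simp
      have gm: "g (?y, s) \<in> eval_moves G R (?y, s) \<and> g (?y, s) \<in> X" using good_at[OF W(1)] o by blast
      then obtain w' t where wt: "g (?y, s) = (w', t)" "(?y, w') \<in> pE G" "(s, t) \<in> R" using LBox by auto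
      have w': "w' \<in> succs G ?y" using wt by (simp add: succs_def)
      obtain b where b: "b \<in> B" "t \<in> U b" using ns wt(3) unfolding nabla_sat_def by blast
      have BA: "B = A_mchi G m \<chi>"
      proof -
        have "B \<in> {A_mchi G m \<chi>, {}}" using B(1) unfolding theta_def by (auto split: if_splits)
        then show ?thesis using b(1) by auto
      qed
      have db: "(?y, pOm G w', w') \<in> d_box G ?M" unfolding d_box_def using yM LBox W(2) w' by (auto simp: Vlab_def)
      have "b = ?e ;; d_box G ?M \<or> (\<exists>x. b = ?e ;; d_dia G x ?M)" using b(1) unfolding BA A_mchi_def by blast
      then have "(?y, pOm G w', w') \<in> d_box G ?M \<and> b = ?e ;; d_box G ?M \<or> (\<exists>x. (?y, pOm G w', w') \<in> d_dia G x ?M \<and> b = ?e ;; d_dia G x ?M)"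
        using db unfolding d_dia_def by blast
      then have inb: "(v, max k' (pOm G w'), w') \<in> b" using comp_intro[OF ey] by blast
      have bS: "b \<in> macrostates G" using U2 b(2) by blast
      have mv: "ABasic b t \<in> acc_moves (aut_G G) R Val (AMark U)" using bS b unfolding aut_G_def by simp
      have "gs (?y, s) (w', t)" unfolding pstep_def using gm wt W(1,2) o succs_pV[OF w'] by auto
      then show ?thesis using mv inb gm wt succs_pV[OF w'] by auto
    next
      case LTop
      then show ?thesis using good_at[OF W(1)] by simp
    next
      case LBot
      then show ?thesis using cp yM unfolding compatible_def by blast
    next
      case (LLit p)
      then have "p \<in> Val s" using cp yM unfolding compatible_def by blast
      then show ?thesis using good_at[OF W(1)] LLit by simp
    next
      case (LNLit p)
      then have "p \<notin> Val s" using cp yM unfolding compatible_def by blast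
      then show ?thesis using good_at[OF W(1)] LNLit by simp
    qed (use lab in auto)
    then obtain b t w' k where bt: "ABasic b t \<in> acc_moves (aut_G G) R Val (AMark U)" "(v, k, w') \<in> b"
        "(w', t) \<in> X" "w' \<in> pV G" "gs (?y, s) (w', t)" "k = max k' (pOm G w')" by blast
    define seg where "seg = map (\<lambda>i. (w i, s)) [1..<Suc j] @ [(w', t)]"
    have "(v, s) # seg = map (\<lambda>i. (w i, s)) [0..<Suc j] @ [(w', t)]"
      unfolding seg_def using w0 by (simp add: upt_rec)
    then have ch: "pchain gs ((v, s) # seg)" using chain_upt_snoc[OF W(4)] bt(5) by simp
    have kk: "k = Max (pOm G ` fst ` set seg)"
    proof (cases "j = 0")
      case True then show ?thesis using bt(6) unfolding seg_def k'_def by simp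
    next
      case False
      have "fst ` set seg = set (map w [1..<Suc j] @ [w'])" unfolding seg_def by force
      then show ?thesis using bt(6) Max_snoc[of "map w [1..<Suc j]" w'] False unfolding k'_def by simp
    qed
    show ?thesis using bt ch kk unfolding seg_def by (intro exI[of _ b] exI[of _ t] exI[of _ w'] exI[of _ k]) auto
  qed
qed

end

context dir2
begin

lemma dir2_main: "\<not> acc_E_wins (aut_G G) R Val (ABasic (Delta {pvI G}) s0)"
proof
  let ?mv = "acc_moves (aut_G G) R Val"
  let ?q = "ABasic (Delta {pvI G}) s0 :: ('v macro, 's) apos"
  assume "acc_E_wins (aut_G G) R Val ?q"
  then obtain \<sigma> where \<sigma>: "E_winning_strategy acc_owner ?mv (acc_wincond (aut_G G)) \<sigma> ?q"
    unfolding acc_E_wins_def E_wins_def by blast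
  define Inv2 where "Inv2 x \<longleftrightarrow> (case x of (h, v) \<Rightarrow> h \<noteq> [] \<and> hd h = ?q \<and> path_ok ?mv h \<and> consistent_fin acc_owner \<sigma> h \<and>
      (\<exists>m s. last h = ABasic m s \<and> v \<in> Ran_m m \<and> (v, s) \<in> X \<and> v \<in> pV G))" for x
  define Rel where "Rel x y \<longleftrightarrow> (case x of (h, v) \<Rightarrow> case y of (h', v', seg, k) \<Rightarrow>
      (\<exists>m s b t. last h = ABasic m s \<and> h' = h @ [\<sigma> h, ABasic b t] \<and> (v, k, v') \<in> b \<and>
        seg \<noteq> [] \<and> pchain gs ((v, s) # seg) \<and> last seg = (v', t) \<and> k = Max (pOm G ` fst ` set seg)))" for x y
  have stepex: "\<exists>y. Rel x y \<and> Inv2 (fst y, fst (snd y))" if "Inv2 x" for x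
  proof -
    obtain h v where x: "x = (h, v)" by (cases x)
    have "h \<noteq> [] \<and> hd h = ?q \<and> path_ok ?mv h \<and> consistent_fin acc_owner \<sigma> h \<and>
      (\<exists>m s. last h = ABasic m s \<and> v \<in> Ran_m m \<and> (v, s) \<in> X \<and> v \<in> pV G)"
      using that unfolding Inv2_def x by simp
    then obtain m s where h: "h \<noteq> []" "hd h = ?q" "path_ok ?mv h" "consistent_fin acc_owner \<sigma> h"
      "last h = ABasic m s" "v \<in> Ran_m m" "(v, s) \<in> X" "v \<in> pV G"
      by blast
    have w1: "(acc_owner (last h) \<and> ?mv (last h) \<noteq> {} \<longrightarrow> \<sigma> h \<in> ?mv (last h)) \<and>
        (?mv (last h) = {} \<longrightarrow> \<not> acc_owner (last h))"
      using \<sigma> h(1-4) unfolding E_winning_strategy_def by blast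
    have "\<sigma> h \<in> ?mv (ABasic m s)" using w1 h(5) by auto
    then obtain U where U: "\<sigma> h = AMark U" "AMark U \<in> ?mv (ABasic m s)" by auto
    obtain b t w k seg where st: "ABasic b t \<in> ?mv (AMark U)" "(v, k, w) \<in> b" "(w, t) \<in> X" "w \<in> pV G"
      "seg \<noteq> []" "pchain gs ((v, s) # seg)" "last seg = (w, t)" "k = Max (pOm G ` fst ` set seg)"
      using step2[OF h(7) h(8) h(6) U(2)] by blast
    define h' where "h' = h @ [\<sigma> h, ABasic b t]"
    have "Rel x (h', w, seg, k)" unfolding Rel_def x h'_def using h(5) st by auto
    moreover have "Inv2 (h', w)"
    proof -
      have p1: "path_ok ?mv (h @ [\<sigma> h])" using h(3,1,5) U by (simp add: path_ok_snoc)
      have p2: "path_ok ?mv h'" unfolding h'_def using p1 U st(1) path_ok_snoc[of ?mv "h @ [\<sigma> h]" "ABasic b t"] by simp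
      have c1: "consistent_fin acc_owner \<sigma> (h @ [\<sigma> h])" using h(4) by (simp add: consistent_fin_snoc)
      have c2: "consistent_fin acc_owner \<sigma> h'" unfolding h'_def using c1 U
        consistent_fin_snoc[of acc_owner \<sigma> "h @ [\<sigma> h]" "ABasic b t"] by simp
      have "w \<in> Ran_m b" using st(2) unfolding Ran_m_def by blast
      then show ?thesis unfolding Inv2_def h'_def using p2 c2 h(1,2) st(3,4) unfolding h'_def by auto
    qed
    ultimately show ?thesis by auto
  qed
  define x0 where "x0 = ([?q], pvI G)"
  have inv0: "Inv2 x0" unfolding Inv2_def x0_def path_ok_def consistent_fin_def Ran_m_def Delta_def
    using st vI by auto
  define nxt where "nxt x = (SOME y. Rel x y \<and> Inv2 (fst y, fst (snd y)))" for x
  define S where "S = rec_nat x0 (\<lambda>n x. (fst (nxt x), fst (snd (nxt x))))"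
  have S0: "S 0 = x0" and SS: "S (Suc n) = (fst (nxt (S n)), fst (snd (nxt (S n))))" for n
    unfolding S_def by simp_all
  have SI: "Inv2 (S n)" for n
  proof (induction n)
    case 0 then show ?case using inv0 S0 by simp
  next
    case (Suc n)
    then show ?case using someI_ex[OF stepex[OF Suc]] SS[of n] unfolding nxt_def by simp
  qed
  have SR: "Rel (S n) (nxt (S n))" for n
    using someI_ex[OF stepex[OF SI[of n]]] unfolding nxt_def by blast
  define H where "H n = fst (S n)" for n
  define V where "V n = snd (S n)" for n
  define seg where "seg n = fst (snd (snd (nxt (S n))))" for n
  define K where "K n = snd (snd (snd (nxt (S n))))" for n
  have Rn: "\<exists>m s b t. last (H n) = ABasic m s \<and> H (Suc n) = H n @ [\<sigma> (H n), ABasic b t] \<and> (V n, K n, V (Suc n)) \<in> b \<and>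
        seg n \<noteq> [] \<and> pchain gs ((V n, s) # seg n) \<and> last (seg n) = (V (Suc n), t) \<and> K n = Max (pOm G ` fst ` set (seg n))" for n
  proof -
    obtain h v where hv: "S n = (h, v)" by (cases "S n")
    obtain h' v' sg k where y: "nxt (S n) = (h', v', sg, k)" by (cases "nxt (S n)") auto
    have "Rel (h, v) (h', v', sg, k)" using SR[of n] hv y by simp
    then show ?thesis unfolding Rel_def H_def V_def seg_def K_def SS using hv y by simp
  qed
  have Hl: "length (H n) = Suc (2 * n)" for n
  proof (induction n)
    case 0 then show ?case using S0 unfolding H_def x0_def by simp
  next
    case (Suc n) then show ?case using Rn[of n] by auto
  qed
  have Hpref: "H (n + k) ! i = H n ! i" if "i < length (H n)" for n k i
  proof (induction k)
    case 0 then show ?case by simp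
  next
    case (Suc k)
    obtain b t where "H (Suc (n + k)) = H (n + k) @ [\<sigma> (H (n + k)), ABasic b t]" using Rn[of "n + k"] by blast
    moreover have "i < length (H (n + k))" using that Hl by simp
    ultimately show ?case using Suc by (simp add: nth_append)
  qed
  have Hpref2: "H m ! i = H n ! i" if "i < length (H n)" "n \<le> m" for n m i
    using Hpref[OF that(1), of "m - n"] that(2) by simp
  define \<pi> where "\<pi> i = H i ! i" for i
  have piH: "\<pi> i = H n ! i" if "i < length (H n)" for i n
  proof (cases "i \<le> n")
    case True
    have "i < length (H i)" using Hl by simp
    then show ?thesis unfolding \<pi>_def by (rule Hpref2[OF _ True, symmetric])
  next
    case False
    then have "n \<le> i" by simp
    then show ?thesis unfolding \<pi>_def by (rule Hpref2[OF that])
  qed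
  have mapH: "map \<pi> [0..<Suc (2 * n)] = H n" for n
  proof (rule nth_equalityI)
    show "length (map \<pi> [0..<Suc (2 * n)]) = length (H n)" using Hl by simp
    fix i assume "i < length (map \<pi> [0..<Suc (2 * n)])"
    then have i: "i < length (H n)" using Hl by simp
    then show "map \<pi> [0..<Suc (2 * n)] ! i = H n ! i" using piH[OF i] Hl by (simp del: upt_Suc)
  qed
  have lastH: "last (H n) = \<pi> (2 * n)" for n
  proof -
    have ne: "H n \<noteq> []" using Hl[of n] by auto
    then have "last (H n) = H n ! (length (H n) - 1)" by (rule last_conv_nth)
    also have "... = H n ! (2 * n)" using Hl[of n] by simp
    also have "... = \<pi> (2 * n)" using piH[of "2 * n" n] Hl[of n] by simp
    finally show ?thesis .
  qed
  have vH: "H n \<noteq> [] \<and> hd (H n) = ?q \<and> path_ok ?mv (H n) \<and> consistent_fin acc_owner \<sigma> (H n) \<and>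
      (\<exists>m s. last (H n) = ABasic m s \<and> V n \<in> Ran_m m \<and> (V n, s) \<in> X \<and> V n \<in> pV G)" for n
    using SI[of n] unfolding Inv2_def H_def V_def by (cases "S n") auto
  have H0: "H 0 = [?q]" using S0 unfolding H_def x0_def by simp
  have p0: "\<pi> 0 = ?q" using piH[of 0 0] H0 by simp
  have mvs: "\<pi> (Suc i) \<in> ?mv (\<pi> i)" for i
  proof -
    have l: "Suc i < length (H (Suc i))" using Hl by simp
    have l2: "i < length (H (Suc i))" using l by simp
    have "H (Suc i) ! Suc i \<in> ?mv (H (Suc i) ! i)" using vH[of "Suc i"] l unfolding path_ok_def by blast
    then show ?thesis using piH[OF l] piH[OF l2] by simp
  qed
  have evenB: "(\<exists>m s. \<pi> j = ABasic m s) \<longleftrightarrow> even j" for j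
  proof -
    have a: "\<exists>m s. \<pi> (2 * n) = ABasic m s" for n using vH[of n] lastH[of n] by auto
    have b: "\<pi> (Suc (2 * n)) = \<sigma> (H n)" for n
    proof -
      obtain b t where "H (Suc n) = H n @ [\<sigma> (H n), ABasic b t]" using Rn[of n] by blast
      moreover have "Suc (2 * n) < length (H (Suc n))" using Hl by simp
      ultimately show ?thesis using piH[of "Suc (2 * n)" "Suc n"] Hl[of n] by (simp add: nth_append)
    qed
    have c: "\<exists>U. \<sigma> (H n) = AMark U" for n
    proof -
      obtain m s where ms: "last (H n) = ABasic m s" using vH[of n] by blast
      have "\<sigma> (H n) \<in> ?mv (last (H n))"
        using \<sigma> vH[of n] ms unfolding E_winning_strategy_def by auto
      then show ?thesis using ms by auto
    qed
    show ?thesis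
    proof (cases "even j")
      case True then obtain n where "j = 2 * n" by (auto elim: evenE)
      then show ?thesis using a True by auto
    next
      case False then obtain n where jn: "j = Suc (2 * n)" by (auto elim: oddE)
      obtain U where "\<sigma> (H n) = AMark U" using c by blast
      then have "\<pi> j = AMark U" using b jn by simp
      then show ?thesis using False by simp
    qed
  qed
  have ci: "consistent_inf acc_owner \<sigma> \<pi>" unfolding consistent_inf_def
  proof (intro allI impI)
    fix i assume o: "acc_owner (\<pi> i)"
    then have "\<exists>m s. \<pi> i = ABasic m s" by (cases "\<pi> i") auto
    then obtain n where n: "i = 2 * n" using evenB by (auto elim: evenE)
    obtain b t where "H (Suc n) = H n @ [\<sigma> (H n), ABasic b t]" using Rn[of n] by blast
    moreover have "Suc (2 * n) < length (H (Suc n))" using Hl by simp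
    ultimately have "\<pi> (Suc i) = \<sigma> (H n)" using piH[of "Suc (2 * n)" "Suc n"] Hl[of n] n by (simp add: nth_append)
    then show "\<pi> (Suc i) = \<sigma> (map \<pi> [0..<Suc i])" using mapH[of n] n by simp
  qed
  have w2: "\<forall>\<pi>. \<pi> 0 = ?q \<and> (\<forall>i. \<pi> (Suc i) \<in> ?mv (\<pi> i)) \<and> consistent_inf acc_owner \<sigma> \<pi> \<longrightarrow> acc_wincond (aut_G G) \<pi>"
    using \<sigma> unfolding E_winning_strategy_def by blast
  have "acc_wincond (aut_G G) \<pi>" using w2[rule_format, of \<pi>] p0 mvs ci by blast
  then have nbt: "NBT (\<lambda>i. apos_state (\<pi> (2 * i)))" unfolding acc_wincond_def aut_G_def by simp
  define ms where "ms i = apos_state (\<pi> (2 * i))" for i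
  define ss where "ss i = (case \<pi> (2 * i) of ABasic m s \<Rightarrow> s)" for i
  have lastms: "last (H n) = ABasic (ms n) (ss n)" for n
    using vH[of n] lastH[of n] unfolding ms_def ss_def by auto
  have RnS: "(V n, K n, V (Suc n)) \<in> ms (Suc n) \<and> pchain gs ((V n, ss n) # seg n) \<and> last (seg n) = (V (Suc n), ss (Suc n)) \<and>
      seg n \<noteq> [] \<and> K n = Max (pOm G ` fst ` set (seg n))" for n
  proof -
    obtain m s b t where r: "last (H n) = ABasic m s" "H (Suc n) = H n @ [\<sigma> (H n), ABasic b t]" "(V n, K n, V (Suc n)) \<in> b"
        "seg n \<noteq> []" "pchain gs ((V n, s) # seg n)" "last (seg n) = (V (Suc n), t)" "K n = Max (pOm G ` fst ` set (seg n))"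
      using Rn[of n] by blast
    have "last (H (Suc n)) = ABasic b t" using r(2) by simp
    then have "ms (Suc n) = b" "ss (Suc n) = t" using lastms[of "Suc n"] by auto
    moreover have "ms n = m" "ss n = s" using lastms[of n] r(1) by auto
    ultimately show ?thesis using r by simp
  qed
  have ms0: "ms 0 = Delta {pvI G}" "ss 0 = s0" "V 0 = pvI G"
    using lastms[of 0] S0 unfolding H_def V_def x0_def by auto
  define vs where "vs i = (if i = 0 then pvI G else V (i - 1))" for i
  define ks where "ks i = (if i = 0 then 0 else K (i - 1))" for i
  have kb: "K n \<le> dmax" for n
  proof -
    have c: "pchain gs ((V n, ss n) # seg n)" "seg n \<noteq> []" using RnS[of n] by auto
    have "\<forall>y\<in>set (seg n). fst y \<in> pV G"
    proof
      fix y assume "y \<in> set (seg n)"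
      then have "y \<in> set (tl ((V n, ss n) # seg n))" by simp
      from chain_tl_prop[OF c(1) this, of "\<lambda>q. fst q \<in> pV G"] show "fst y \<in> pV G" unfolding pstep_def by blast
    qed
    then show ?thesis using RnS[of n] c(2) pOm_bd by (simp add: Max_le_iff)
  qed
  have "bad_trace ms vs ks"
    unfolding bad_trace_def
  proof
    show "\<forall>i. (vs i, ks i, vs (Suc i)) \<in> ms i"
    proof
      fix i show "(vs i, ks i, vs (Suc i)) \<in> ms i"
      proof (cases i)
        case 0 then show ?thesis using ms0 unfolding vs_def ks_def Delta_def by simp
      next
        case (Suc j)
        have "(V j, K j, V (Suc j)) \<in> ms (Suc j)" using RnS[of j] by blast
        then show ?thesis using Suc unfolding vs_def ks_def by simp
      qed
    qed
    have ne: "\<forall>i. seg i \<noteq> []" using RnS by blast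
    have stt: "(if i = 0 then (pvI G, s0) else last (seg (i - 1))) = (V i, ss i)" for i
      using ms0 RnS[of "i - 1"] by (cases i) auto
    have ch: "\<forall>i. pchain gs ((if i = 0 then (pvI G, s0) else last (seg (i - 1))) # seg i)"
      using stt RnS by simp
    have ev: "even (LS (\<lambda>i. Max (pOm G ` fst ` set (seg i)))) = False"
      using seg_parity[OF wn ne ch] .
    have eq: "(\<lambda>i. Max (pOm G ` fst ` set (seg i))) = (\<lambda>i. ks (i + 1))"
      unfolding ks_def using RnS by simp
    have kb2: "\<forall>i. ks i \<le> dmax" using kb unfolding ks_def by simp
    have "LS (\<lambda>i. Max (pOm G ` fst ` set (seg i))) = LS (\<lambda>i. ks (i + 1))" by (simp only: eq)
    also have "... = LS ks" by (rule LS_shift[OF kb2])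
    finally have "odd (LS ks)" using ev by simp
    then show "odd (Max {k. inf_often (\<lambda>i. ks i = k)})" unfolding LS_def by simp
  qed
  then show False using nbt unfolding NBT_def ms_def by blast
qed

end

context pfc
begin

lemma moves_pV: "fst q \<in> pV G \<Longrightarrow> q' \<in> eval_moves G R q \<Longrightarrow> fst q' \<in> pV G"
proof -
  assume a: "fst q \<in> pV G" "q' \<in> eval_moves G R q"
  obtain v s where q: "q = (v, s)" by (cases q)
  have "(v, fst q') \<in> pE G" using a(2) unfolding q by (cases "pL G v") auto
  then show ?thesis using Esub by auto
qed

lemma wincond_eq:
  assumes "\<pi> 0 = (pvI G, s)" "\<forall>i. \<pi> (Suc i) \<in> eval_moves G R (\<pi> i)"
  shows "eval_wincond G \<pi> = wins prE True \<pi>"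
proof -
  have inV: "fst (\<pi> i) \<in> pV G" for i
  proof (induction i)
    case 0 then show ?case using assms(1) vI by simp
  next
    case (Suc i) then show ?case using moves_pV[OF Suc.IH, of "\<pi> (Suc i)" R] assms(2) by blast
  qed
  have c: "LS (\<lambda>i. prE (\<pi> i)) = LS (\<lambda>i. pOm G (fst (\<pi> i)))"
    by (rule LS_cong) (use inV in \<open>simp add: prE_def\<close>)
  have "eval_wincond G \<pi> = even (LS (\<lambda>i. pOm G (fst (\<pi> i))))" unfolding eval_wincond_def LS_def by simp
  then show ?thesis unfolding wins_def c by simp
qed

lemma main_equiv:
  fixes R :: "'s rel" and Val :: "'s \<Rightarrow> 'p set" and s :: 's
  shows "eval_E_wins G R Val (pvI G, s) \<longleftrightarrow> acc_E_wins (aut_G G) R Val (ABasic (aInit (aut_G G)) s)"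
proof -
  let ?own = "eval_owner G Val" and ?mv = "eval_moves G R"
  let ?q = "(pvI G, s)"
  have bd: "\<forall>q. prE q \<le> dmax" using prE_bd by blast
  have det: "(\<exists>f. pwin ?own ?mv prE True f ?q) \<or> (\<exists>g. pwin ?own ?mv prE False g ?q)"
    by (rule posdet[of dmax ?own, rule_format]) (rule prE_bd)
  have init: "aInit (aut_G G) = Delta {pvI G}" unfolding aut_G_def by simp
  show ?thesis
  proof
    assume ew: "eval_E_wins G R Val ?q"
    have nog: "\<not> pwin ?own ?mv prE False g ?q" for g
    proof
      assume pg: "pwin ?own ?mv prE False g ?q"
      show False
      proof (rule Ewins_pwin_False[OF ew[unfolded eval_E_wins_def] pg])
        fix \<pi> assume a: "\<pi> 0 = ?q" "\<forall>i. \<pi> (Suc i) \<in> ?mv (\<pi> i)" "eval_wincond G \<pi>"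
        then show "wins prE True \<pi>" using wincond_eq[OF a(1,2)] by simp
      qed
    qed
    then obtain f where pf: "pwin ?own ?mv prE True f ?q" using det by blast
    have "\<exists>X. ?q \<in> X \<and> good ?own ?mv True {} X f \<and> (\<forall>\<pi>. play_in ?own ?mv True f X \<pi> \<longrightarrow> wins prE True \<pi>)"
      using pf unfolding pwin_def .
    then obtain X where X: "?q \<in> X" "good ?own ?mv True {} X f" "\<forall>\<pi>. play_in ?own ?mv True f X \<pi> \<longrightarrow> wins prE True \<pi>"
      by blast
    interpret d1: dir1 G R Val f X s
      by (unfold_locales) (use X in auto)
    show "acc_E_wins (aut_G G) R Val (ABasic (aInit (aut_G G)) s)"
      using d1.dir1_main init by simp
  next
    assume aw: "acc_E_wins (aut_G G) R Val (ABasic (aInit (aut_G G)) s)"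
    show "eval_E_wins G R Val ?q"
    proof (rule ccontr)
      assume ne: "\<not> eval_E_wins G R Val ?q"
      have nof: "\<not> pwin ?own ?mv prE True f ?q" for f
      proof
        assume pf: "pwin ?own ?mv prE True f ?q"
        have "E_wins ?own ?mv (eval_wincond G) ?q"
        proof (rule pwin_imp_Ewins[OF pf])
          fix \<pi> assume a: "\<pi> 0 = ?q" "\<forall>i. \<pi> (Suc i) \<in> ?mv (\<pi> i)" "wins prE True \<pi>"
          then show "eval_wincond G \<pi>" using wincond_eq[OF a(1,2)] by simp
        qed
        then show False using ne unfolding eval_E_wins_def by blast
      qed
      then obtain g where pg: "pwin ?own ?mv prE False g ?q" using det by blast
      have "\<exists>X. ?q \<in> X \<and> good ?own ?mv False {} X g \<and> (\<forall>\<pi>. play_in ?own ?mv False g X \<pi> \<longrightarrow> wins prE False \<pi>)"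
        using pg unfolding pwin_def .
      then obtain X where X: "?q \<in> X" "good ?own ?mv False {} X g" "\<forall>\<pi>. play_in ?own ?mv False g X \<pi> \<longrightarrow> wins prE False \<pi>"
        by blast
      interpret d2: dir2 G R Val g X s
        by (unfold_locales) (use X in auto)
      show False using d2.dir2_main aw init by simp
    qed
  qed
qed

end

theorem proposition3:
  fixes G :: "('v, 'p :: finite) pformula"
  assumes "parity_formula G"
    and "\<forall>v \<in> pV G. pL G v \<noteq> LEps"
    and "\<forall>v \<in> pV G. pL G v \<in> {LAnd, LOr} \<longrightarrow> succs G v \<noteq> {}"
  shows "\<forall>(R :: 's rel) (Val :: 's \<Rightarrow> 'p set) (s :: 's).
           eval_E_wins G R Val (pvI G, s) \<longleftrightarrow>
           acc_E_wins (aut_G G) R Val (ABasic (aInit (aut_G G)) s)"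
proof (intro allI)
  fix R :: "'s rel" and Val :: "'s \<Rightarrow> 'p set" and s :: 's
  interpret pfc G using assms by unfold_locales
  show "eval_E_wins G R Val (pvI G, s) \<longleftrightarrow> acc_E_wins (aut_G G) R Val (ABasic (aInit (aut_G G)) s)"
    by (rule main_equiv)
qed

end
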